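(* Assume the standing assumptions below and in addition that $\mathbb{P}_x(\exists t>0,\ X_t=y)>0$ for all $x,y>0$. Then for every $x\ge0$, $$\mathbb{P}_x\Big(\tau_0<+\infty\ \text{ or }\ \lim_{t\to\infty}X_t=+\infty\Big)=1;$$ equivalently, almost surely either $\mathcal{H}(\mathbb{T})=\infty$ (and then $\mathcal{L}(\mathbb{T})=\infty$) or $\mathcal{L}(\mathbb{T})<\infty$. Moreover, $$\big(\exists x>0,\ \mathbb{P}_x(\tau_0=+\infty)>0\big)\iff\big(\forall x>0,\ \mathbb{P}_x(\tau_0=+\infty)>0\big).$$
   Context: Standing setting. Let $b:\mathbb{R}_+\to\mathbb{R}_+$ be measurable and locally bounded (birth rate), and let $K(x,dy)$ be a Markov kernel from $\mathbb{R}_+$ to probability measures on $(0,\infty]$ (lifetime kernel) such that $x\mapsto\int f(y)K(x,dy)$ is continuous for every bounded continuous $f$. The inhomogeneous splitting tree $\mathbb{T}$ with parameters $(b,K)$: under $\mathbb{P}_x$ the ancestor is born at time $0$ with lifetime $x$; an individual born at time $B$ with lifetime $\xi$ is alive on $(B,B+\xi]$ and gives birth to one child at each atom in $(B,B+\xi]$ of a Poisson point process with intensity $b(t)dt$; a child born at time $s$ gets a lifetime with law $K(s,\cdot)$; everything independent given birth times. $\mathcal{H}(\mathbb{T})$ is the supremum of all death times; $\mathcal{L}(\mathbb{T})$ is the sum of all lifetimes. The contour process $X$ is the Markov process on $\mathbb{R}_+$ which under $\mathbb{P}_x$ starts at $x$, decreases at unit speed, jumps when at position $z$ at rate $b(z)$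 with jump size distributed according to $K(z,\cdot)$, and is absorbed at $0$; it has the law of the contour (JCCP) of $\mathbb{T}$, which reaches $0$ exactly at time $\mathcal{L}(\mathbb{T})$. $\tau_0=\inf\{r\ge0:X_r=0\}$. *)

theory Defs
  imports "HOL-Probability.Probability"
begin

text \<open>Explicit construction of the contour process X of the inhomogeneous splitting
tree with parameters (b,K), driven by an i.i.d. sequence of pairs (E_n,U_n) with
E_n ~ Exp(1) and U_n ~ Uniform(0,1) (all independent).\<close>

definition noise :: "(nat \<Rightarrow> real \<times> real) measure" where
  "noise = (\<Pi>\<^sub>M n\<in>UNIV. (density lborel (exponential_density 1)
                 \<Otimes>\<^sub>M uniform_measure lborel {0<..<1}))"

definition hazard :: "(real \<Rightarrow> real) \<Rightarrow> real \<Rightarrow> real \<Rightarrow> real" where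
  "hazard b z s = (LINT u:{z - s<..z}|lborel. b u)"

definition lquantile :: "(real \<Rightarrow> ereal measure) \<Rightarrow> real \<Rightarrow> real \<Rightarrow> ereal" where
  "lquantile K w u = Inf {y::ereal. u \<le> measure (K w) {..y}}"

text \<open>One step of the embedded chain (position right after a jump, time of that jump).
  From level z>0 the process descends at unit speed; a jump occurs after descending by
  S = inf{s. E \<le> hazard z s} (so it occurs with rate b at the current level), the new
  position being (z - S) + (lifetime drawn from K(z - S, .)); if hazard z z < E the process
  reaches 0 at time t + z.\<close>
definition cstep :: "(real \<Rightarrow> real) \<Rightarrow> (real \<Rightarrow> ereal measure) \<Rightarrow> real \<times> real
                     \<Rightarrow> ereal \<times> ereal \<Rightarrow> ereal \<times> ereal" where
  "cstep b K eu zt =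
     (let e = fst eu; u = snd eu; z = fst zt; t = snd zt in
      if z = 0 \<or> z = \<infinity> then (z, \<infinity>)
      else (let r = real_of_ereal z in
            if hazard b r r < e then (0, t + ereal r)
            else (let S = Inf {s\<in>{0..r}. e \<le> hazard b r s}; w = r - S
                  in (ereal w + lquantile K w u, t + ereal S))))"

primrec chain :: "(real \<Rightarrow> real) \<Rightarrow> (real \<Rightarrow> ereal measure) \<Rightarrow> real
                   \<Rightarrow> (nat \<Rightarrow> real \<times> real) \<Rightarrow> nat \<Rightarrow> ereal \<times> ereal" where
  "chain b K x \<omega> 0 = (ereal x, 0)"
| "chain b K x \<omega> (Suc n) = cstep b K (\<omega> n) (chain b K x \<omega> n)"

text \<open>The contour process X_t (started at x under P_x); after an explosion
  (accumulation of jump times) it is set to +infinity.\<close>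
definition contour :: "(real \<Rightarrow> real) \<Rightarrow> (real \<Rightarrow> ereal measure) \<Rightarrow> real
                       \<Rightarrow> (nat \<Rightarrow> real \<times> real) \<Rightarrow> real \<Rightarrow> ereal" where
  "contour b K x \<omega> t =
     (if \<exists>n. ereal t < snd (chain b K x \<omega> (Suc n)) then
        (let n = (LEAST n. ereal t < snd (chain b K x \<omega> (Suc n)));
             z = fst (chain b K x \<omega> n); s = snd (chain b K x \<omega> n) in
         if z = \<infinity> then \<infinity> else if z = 0 then 0 else z - (ereal t - s))
      else \<infinity>)"

definition tau0 :: "(real \<Rightarrow> real) \<Rightarrow> (real \<Rightarrow> ereal measure) \<Rightarrow> real
                    \<Rightarrow> (nat \<Rightarrow> real \<times> real) \<Rightarrow> ereal" where
  "tau0 b K x \<omega> = Inf {ereal r | r. 0 \<le> r \<and> contour b K x \<omega> r = 0}"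

end

theory Submission
  imports Defs
begin


definition Gf :: "(real \<Rightarrow> real) \<Rightarrow> real \<Rightarrow> real" where
  "Gf b x = (LINT u:{0<..x}|lborel. b u)"

locale setting =
  fixes b :: "real \<Rightarrow> real" and K :: "real \<Rightarrow> ereal measure"
  assumes b_meas: "b \<in> borel_measurable (restrict_space borel {0..})"
    and b_nonneg: "\<forall>x\<ge>0. 0 \<le> b x"
    and b_locbdd: "\<forall>c\<ge>0. \<exists>B. \<forall>x\<in>{0..c}. b x \<le> B"
    and K_prob: "\<forall>x\<ge>0. prob_space (K x) \<and> sets (K x) = sets borel"
    and K_pos: "\<forall>x\<ge>0. emeasure (K x) {..0} = 0"
    and K_meas: "\<forall>A\<in>sets (borel :: ereal measure).
                   (\<lambda>x. emeasure (K x) A) \<in> borel_measurable (restrict_space borel {0..})"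
begin

abbreviation "G \<equiv> Gf b"

lemma b_ind_meas: "(\<lambda>x. indicator {0..} x * b x) \<in> borel_measurable borel"
  using b_meas borel_measurable_restrict_space_iff[of "{0..}" borel b] by simp

lemma set_integrable_b:
  assumes A: "A \<in> sets borel" "A \<subseteq> {0..c}"
  shows "set_integrable lborel A b"
proof -
  have c: "0 \<le> c \<or> A = {}" using A by auto
  obtain B where B: "\<forall>x\<in>{0..max c 0}. b x \<le> B" using b_locbdd[rule_format, of "max c 0"] by auto
  have m: "(\<lambda>x. indicator A x * b x) \<in> borel_measurable borel"
  proof -
    have "(\<lambda>x. indicator A x * b x) = (\<lambda>x. indicator A x * (indicator {0..} x * b x))"
      using A by (auto simp: indicator_def fun_eq_iff)
    then show ?thesis using b_ind_meas A by simp
  qed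
  show ?thesis unfolding set_integrable_def
  proof (rule integrableI_bounded_set[where A="{0..max c 0}" and B=B])
    show "(\<lambda>x. indicat_real A x *\<^sub>R b x) \<in> borel_measurable lborel" using m by simp
    show "AE x in lborel. x \<notin> {0..max c 0} \<longrightarrow> indicat_real A x *\<^sub>R b x = 0"
      by (rule AE_I2) (use A in \<open>auto simp: indicator_def\<close>)
    show "AE x in lborel. x \<in> {0..max c 0} \<longrightarrow> norm (indicat_real A x *\<^sub>R b x) \<le> B"
    proof (rule AE_I2, intro impI)
      fix x assume x: "x \<in> {0..max c 0}"
      then have "0 \<le> b x" "b x \<le> B" using B b_nonneg by auto
      then show "norm (indicat_real A x *\<^sub>R b x) \<le> B" by (auto simp: indicator_def)
    qed
    show "{0..max c 0} \<in> sets lborel" by simp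
    show "emeasure lborel {0..max c 0} < \<infinity>" by simp
  qed
qed

lemma G_nonneg: "0 \<le> G x"
  unfolding Gf_def set_lebesgue_integral_def
  by (intro integral_nonneg_AE AE_I2) (use b_nonneg in \<open>auto simp: indicator_def\<close>)

lemma G_split:
  assumes "0 \<le> y" "y \<le> x"
  shows "G x = G y + (LINT u:{y<..x}|lborel. b u)"
proof -
  have e: "{0<..x} = {0<..y} \<union> {y<..x}" using assms by auto
  have i1: "set_integrable lborel {0<..y} b" by (rule set_integrable_b[of _ y]) auto
  have i2: "set_integrable lborel {y<..x} b" by (rule set_integrable_b[of _ x]) (use assms in auto)
  have d: "{0<..y} \<inter> {y<..x} = {}" by auto
  have "G x = (LINT u:({0<..y} \<union> {y<..x})|lborel. b u)" unfolding Gf_def by (simp only: e)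
  also have "\<dots> = G y + (LINT u:{y<..x}|lborel. b u)" unfolding Gf_def by (rule set_integral_Un[OF d i1 i2])
  finally show ?thesis .
qed

lemma G_mono: "x \<le> y \<Longrightarrow> G x \<le> G y"
proof (cases "0 \<le> x")
  case True
  assume "x \<le> y"
  then have "G y = G x + (LINT u:{x<..y}|lborel. b u)" using G_split[OF True] by blast
  moreover have "0 \<le> (LINT u:{x<..y}|lborel. b u)"
    unfolding set_lebesgue_integral_def
    by (intro integral_nonneg_AE AE_I2) (use b_nonneg True in \<open>auto simp: indicator_def\<close>)
  ultimately show ?thesis by simp
next
  case False
  then have "G x = 0" unfolding Gf_def set_lebesgue_integral_def by simp
  then show ?thesis using G_nonneg by simp
qed

lemma G_meas[measurable]: "G \<in> borel_measurable borel"
  by (rule borel_measurable_mono) (auto simp: mono_def G_mono)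

lemma hazard_G:
  assumes "0 \<le> s" "s \<le> r"
  shows "hazard b r s = G r - G (r - s)"
proof -
  have "G r = G (r - s) + hazard b r s" unfolding hazard_def using G_split[of "r - s" r] assms by simp
  then show ?thesis by simp
qed

lemma hazard_rr: "hazard b r r = G r"
  unfolding hazard_def Gf_def by simp

lemma G_neg: "x \<le> 0 \<Longrightarrow> G x = 0"
  unfolding Gf_def set_lebesgue_integral_def by simp


lemma hazard_mono:
  assumes "0 \<le> s" "s \<le> s'" "s' \<le> r"
  shows "hazard b r s \<le> hazard b r s'"
  using assms by (simp add: hazard_G G_mono)

end

definition Sf :: "(real \<Rightarrow> real) \<Rightarrow> real \<Rightarrow> real \<Rightarrow> real" where
  "Sf b e r = Inf {s\<in>{0..r}. e \<le> hazard b r s}"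

definition Sm :: "(real \<Rightarrow> real) \<Rightarrow> real \<Rightarrow> real \<Rightarrow> real" where
  "Sm b e r = (if Gf b r < e \<or> r < 0 then 0 else Sf b e r)"

context setting begin

lemma Sf_props:
  assumes r: "0 \<le> r" and e: "e \<le> G r"
  shows "0 \<le> Sf b e r" "Sf b e r \<le> r"
    "\<And>s. 0 \<le> s \<Longrightarrow> s \<le> r \<Longrightarrow> e \<le> hazard b r s \<Longrightarrow> Sf b e r \<le> s"
    "\<And>s. 0 \<le> s \<Longrightarrow> s < Sf b e r \<Longrightarrow> hazard b r s < e"
    "\<And>c. Sf b e r < c \<longleftrightarrow> (r < c \<or> (\<exists>q::rat. 0 \<le> real_of_rat q \<and> real_of_rat q < c \<and>
            real_of_rat q \<le> r \<and> e \<le> G r - G (r - real_of_rat q)))"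
proof -
  let ?A = "{s\<in>{0..r}. e \<le> hazard b r s}"
  have rA: "r \<in> ?A" using r e by (simp add: hazard_rr)
  then have ne: "?A \<noteq> {}" by blast
  have bb: "bdd_below ?A" by (rule bdd_belowI[of _ 0]) auto
  show "0 \<le> Sf b e r" unfolding Sf_def by (rule cInf_greatest[OF ne]) auto
  show "Sf b e r \<le> r" unfolding Sf_def by (rule cInf_lower[OF rA bb])
  show le: "Sf b e r \<le> s" if "0 \<le> s" "s \<le> r" "e \<le> hazard b r s" for s
    unfolding Sf_def by (rule cInf_lower[OF _ bb]) (use that in auto)
  show "hazard b r s < e" if "0 \<le> s" "s < Sf b e r" for s
  proof (rule ccontr)
    assume "\<not> hazard b r s < e"
    then have "e \<le> hazard b r s" by simp
    moreover have "s \<le> r" using that \<open>Sf b e r \<le> r\<close> by simp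
    ultimately have "Sf b e r \<le> s" using le that by simp
    then show False using that by simp
  qed
  show "Sf b e r < c \<longleftrightarrow> (r < c \<or> (\<exists>q::rat. 0 \<le> real_of_rat q \<and> real_of_rat q < c \<and>
            real_of_rat q \<le> r \<and> e \<le> G r - G (r - real_of_rat q)))" for c
  proof
    assume "Sf b e r < c"
    then obtain s where s: "s \<in> ?A" "s < c" unfolding Sf_def using cInf_less_iff[OF ne bb] by blast
    show "r < c \<or> (\<exists>q::rat. 0 \<le> real_of_rat q \<and> real_of_rat q < c \<and>
            real_of_rat q \<le> r \<and> e \<le> G r - G (r - real_of_rat q))"
    proof (cases "r < c")
      case False
      obtain q where q: "s < real_of_rat q" "real_of_rat q < c" using of_rat_dense[OF s(2)] by blast
      have s0: "0 \<le> s" "s \<le> r" "e \<le> hazard b r s" using s(1) by auto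
      have "0 \<le> real_of_rat q" using q s0 by linarith
      have "real_of_rat q \<le> r" using q False by linarith
      moreover have "e \<le> hazard b r (real_of_rat q)"
        using s0 q hazard_mono[of s "real_of_rat q" r] \<open>real_of_rat q \<le> r\<close> by linarith
      then have "e \<le> G r - G (r - real_of_rat q)"
        using hazard_G[of "real_of_rat q" r] \<open>0 \<le> real_of_rat q\<close> \<open>real_of_rat q \<le> r\<close> by simp
      then show ?thesis using q \<open>0 \<le> real_of_rat q\<close> \<open>real_of_rat q \<le> r\<close> by blast
    qed simp
  next
    assume "r < c \<or> (\<exists>q::rat. 0 \<le> real_of_rat q \<and> real_of_rat q < c \<and>
            real_of_rat q \<le> r \<and> e \<le> G r - G (r - real_of_rat q))"
    then show "Sf b e r < c"
    proof
      assume "r < c" then show ?thesis using \<open>Sf b e r \<le> r\<close> by simp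
    next
      assume "\<exists>q::rat. 0 \<le> real_of_rat q \<and> real_of_rat q < c \<and>
            real_of_rat q \<le> r \<and> e \<le> G r - G (r - real_of_rat q)"
      then obtain q where q: "0 \<le> real_of_rat q" "real_of_rat q < c"
            "real_of_rat q \<le> r" "e \<le> G r - G (r - real_of_rat q)" by blast
      then have "Sf b e r \<le> real_of_rat q" using le[of "real_of_rat q"] hazard_G[of "real_of_rat q" r] by simp
      then show ?thesis using q by simp
    qed
  qed
qed

lemma Sm_less_iff: "Sm b e r < c \<longleftrightarrow> (((G r < e \<or> r < 0) \<and> 0 < c) \<or>
       (\<not> (G r < e \<or> r < 0) \<and> (r < c \<or> (\<exists>q::rat. 0 \<le> real_of_rat q \<and> real_of_rat q < c \<and>
            real_of_rat q \<le> r \<and> e \<le> G r - G (r - real_of_rat q)))))"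
proof (cases "G r < e \<or> r < 0")
  case False
  then have "0 \<le> r" "e \<le> G r" by auto
  with Sf_props(5)[OF this, of c] False show ?thesis unfolding Sm_def by simp
qed (simp add: Sm_def)

lemma Sm_meas_pair: "(\<lambda>x. Sm b (fst x) (snd x)) \<in> borel_measurable (borel \<Otimes>\<^sub>M borel)"
proof (subst borel_measurable_iff_less, intro allI)
  fix c
  have eq: "{w \<in> space (borel \<Otimes>\<^sub>M borel). Sm b (fst w) (snd w) < c} =
    {w \<in> space (borel \<Otimes>\<^sub>M borel). ((G (snd w) < fst w \<or> snd w < 0) \<and> 0 < c) \<or>
       (\<not> (G (snd w) < fst w \<or> snd w < 0) \<and> (snd w < c \<or> (\<exists>q::rat. 0 \<le> real_of_rat q \<and> real_of_rat q < c \<and>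
            real_of_rat q \<le> snd w \<and> fst w \<le> G (snd w) - G (snd w - real_of_rat q))))}"
    by (simp only: Sm_less_iff)
  show "{w \<in> space (borel \<Otimes>\<^sub>M borel). Sm b (fst w) (snd w) < c} \<in> sets (borel \<Otimes>\<^sub>M borel)"
    unfolding eq by measurable
qed

lemma Sm_meas[measurable (raw)]:
  assumes "f \<in> borel_measurable M" "g \<in> borel_measurable M"
  shows "(\<lambda>x. Sm b (f x) (g x)) \<in> borel_measurable M"
  using measurable_compose[OF measurable_Pair[OF assms] Sm_meas_pair] by simp

lemma K_emeas: "A \<in> sets (borel :: ereal measure) \<Longrightarrow> (\<lambda>w. emeasure (K (max 0 w)) A) \<in> borel_measurable borel"
proof -
  assume A: "A \<in> sets (borel :: ereal measure)"
  have "(\<lambda>w::real. max 0 w) \<in> borel \<rightarrow>\<^sub>M restrict_space borel {0..}"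
    by (rule measurable_restrict_space2) auto
  from measurable_compose[OF this K_meas[rule_format, OF A]] show ?thesis by simp
qed

lemma K_meas_real[measurable (raw)]:
  assumes "A \<in> sets (borel :: ereal measure)" "f \<in> borel_measurable M"
  shows "(\<lambda>x. measure (K (max 0 (f x))) A) \<in> borel_measurable M"
proof -
  have "(\<lambda>w. measure (K (max 0 w)) A) \<in> borel_measurable borel"
    unfolding measure_def using K_emeas[OF assms(1)] by measurable
  from measurable_compose[OF assms(2) this] show ?thesis .
qed

lemma K_mono:
  assumes "0 \<le> w" "y1 \<le> y2"
  shows "measure (K w) {..y1} \<le> measure (K w) {..y2}"
proof -
  interpret prob_space "K w" using K_prob assms by auto
  have "sets (K w) = sets borel" using K_prob assms by auto
  then show ?thesis using assms by (intro finite_measure_mono) auto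
qed

lemma lq_less_iff:
  assumes w: "0 \<le> w"
  shows "lquantile K w u < y \<longleftrightarrow> ((-\<infinity> < y \<and> u \<le> measure (K w) {..-\<infinity>}) \<or>
      (\<exists>q::rat. ereal (real_of_rat q) < y \<and> u \<le> measure (K w) {..ereal (real_of_rat q)}))"
proof
  assume "lquantile K w u < y"
  then obtain y' where y': "u \<le> measure (K w) {..y'}" "y' < y"
    unfolding lquantile_def Inf_less_iff by auto
  show "(-\<infinity> < y \<and> u \<le> measure (K w) {..-\<infinity>}) \<or>
      (\<exists>q::rat. ereal (real_of_rat q) < y \<and> u \<le> measure (K w) {..ereal (real_of_rat q)})"
  proof (cases y')
    case (real v)
    obtain q where q: "v < real_of_rat q" "ereal (real_of_rat q) < y"
    proof (cases y)
      case (real v')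
      then have "v < v'" using y' \<open>y' = ereal v\<close> by simp
      from of_rat_dense[OF this] obtain q where "v < real_of_rat q" "real_of_rat q < v'" by blast
      then show ?thesis using that real by auto
    next
      case PInf
      from of_rat_dense[of v "v+1"] obtain q where "v < real_of_rat q" by auto
      then show ?thesis using that PInf by auto
    next
      case MInf then show ?thesis using y' by simp
    qed
    have "u \<le> measure (K w) {..ereal (real_of_rat q)}"
      using y'(1) K_mono[OF w, of y' "ereal (real_of_rat q)"] q real by simp
    then show ?thesis using q by blast
  next
    case PInf then show ?thesis using y' by simp
  next
    case MInf then show ?thesis using y' by simp
  qed
next
  assume "(-\<infinity> < y \<and> u \<le> measure (K w) {..-\<infinity>}) \<or>
      (\<exists>q::rat. ereal (real_of_rat q) < y \<and> u \<le> measure (K w) {..ereal (real_of_rat q)})"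
  then show "lquantile K w u < y"
  proof
    assume h: "-\<infinity> < y \<and> u \<le> measure (K w) {..-\<infinity>}"
    show ?thesis
    proof -
      have "lquantile K w u \<le> -\<infinity>" unfolding lquantile_def by (rule Inf_lower) (use h in simp)
      then show ?thesis using h by (simp add: ereal_infty_less_eq2)
    qed
  next
    assume "\<exists>q::rat. ereal (real_of_rat q) < y \<and> u \<le> measure (K w) {..ereal (real_of_rat q)}"
    then obtain q where q: "ereal (real_of_rat q) < y" "u \<le> measure (K w) {..ereal (real_of_rat q)}" by blast
    have "lquantile K w u \<le> ereal (real_of_rat q)" unfolding lquantile_def by (rule Inf_lower) (use q in simp)
    then show ?thesis using q by simp
  qed
qed

lemma LQ_meas_pair: "(\<lambda>x. lquantile K (max 0 (fst x)) (snd x)) \<in> borel_measurable (borel \<Otimes>\<^sub>M borel)"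
proof (subst borel_measurable_ereal_iff_Iio, intro allI)
  fix a :: ereal
  have eq: "(\<lambda>x. lquantile K (max 0 (fst x)) (snd x)) -` {..<a} \<inter> space (borel \<Otimes>\<^sub>M borel) =
    {x \<in> space (borel \<Otimes>\<^sub>M borel). (-\<infinity> < a \<and> snd x \<le> measure (K (max 0 (fst x))) {..-\<infinity>}) \<or>
      (\<exists>q::rat. ereal (real_of_rat q) < a \<and> snd x \<le> measure (K (max 0 (fst x))) {..ereal (real_of_rat q)})}"
    using lq_less_iff[of "max 0 _"] by auto
  show "(\<lambda>x. lquantile K (max 0 (fst x)) (snd x)) -` {..<a} \<inter> space (borel \<Otimes>\<^sub>M borel) \<in> sets (borel \<Otimes>\<^sub>M borel)"
    unfolding eq by measurable
qed

lemma LQ_meas[measurable (raw)]: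
  assumes "f \<in> borel_measurable M" "g \<in> borel_measurable M"
  shows "(\<lambda>x. lquantile K (max 0 (f x)) (g x)) \<in> borel_measurable M"
  using measurable_compose[OF measurable_Pair[OF assms] LQ_meas_pair] by simp

end

definition qstep :: "(real \<Rightarrow> real) \<Rightarrow> (real \<Rightarrow> ereal measure) \<Rightarrow> real \<times> real \<Rightarrow> ereal \<Rightarrow> ereal" where
  "qstep b K a z = (if z = 0 \<or> z = \<infinity> then z else
    if Gf b (max 0 (real_of_ereal z)) < fst a then 0
    else ereal (max 0 (real_of_ereal z) - Sm b (fst a) (max 0 (real_of_ereal z))) +
      lquantile K (max 0 (max 0 (real_of_ereal z) - Sm b (fst a) (max 0 (real_of_ereal z)))) (snd a))"

definition qtime :: "(real \<Rightarrow> real) \<Rightarrow> real \<times> real \<Rightarrow> ereal \<Rightarrow> ereal \<Rightarrow> ereal" where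
  "qtime b a z t = (if z = 0 \<or> z = \<infinity> then \<infinity> else
    if Gf b (max 0 (real_of_ereal z)) < fst a then t + ereal (max 0 (real_of_ereal z))
    else t + ereal (Sm b (fst a) (max 0 (real_of_ereal z))))"

context setting begin

lemma qstep_meas[measurable (raw)]:
  assumes "f \<in> M \<rightarrow>\<^sub>M (borel \<Otimes>\<^sub>M borel :: (real \<times> real) measure)" "g \<in> borel_measurable M"
  shows "(\<lambda>x. qstep b K (f x) (g x)) \<in> borel_measurable M"
  unfolding qstep_def using assms by measurable

lemma qtime_meas[measurable (raw)]:
  assumes "f \<in> M \<rightarrow>\<^sub>M (borel \<Otimes>\<^sub>M borel :: (real \<times> real) measure)" "g \<in> borel_measurable M" "h \<in> borel_measurable M"
  shows "(\<lambda>x. qtime b (f x) (g x) (h x)) \<in> borel_measurable M"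
  unfolding qtime_def using assms by measurable

end


definition gs :: "ereal \<Rightarrow> bool" where "gs z \<longleftrightarrow> z = -\<infinity> \<or> 0 \<le> z"

primrec qchain :: "(real \<Rightarrow> real) \<Rightarrow> (real \<Rightarrow> ereal measure) \<Rightarrow> ereal \<Rightarrow> (nat \<Rightarrow> real \<times> real) \<Rightarrow> nat \<Rightarrow> ereal" where
  "qchain b K z \<omega> 0 = z"
| "qchain b K z \<omega> (Suc n) = qstep b K (\<omega> n) (qchain b K z \<omega> n)"

primrec qtchain :: "(real \<Rightarrow> real) \<Rightarrow> (real \<Rightarrow> ereal measure) \<Rightarrow> ereal \<Rightarrow> (nat \<Rightarrow> real \<times> real) \<Rightarrow> nat \<Rightarrow> ereal" where
  "qtchain b K z \<omega> 0 = 0"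
| "qtchain b K z \<omega> (Suc n) = qtime b (\<omega> n) (qchain b K z \<omega> n) (qtchain b K z \<omega> n)"

definition M0 :: "(real \<times> real) measure" where
  "M0 = density lborel (exponential_density 1) \<Otimes>\<^sub>M uniform_measure lborel {0<..<1}"

lemma noise_M0: "noise = PiM UNIV (\<lambda>_. M0)"
  by (simp add: noise_def M0_def)

lemma prob_space_M0: "prob_space M0"
  unfolding M0_def
  by (intro prob_space_pair prob_space_exponential_density prob_space_uniform_measure) auto

lemma sets_M0: "sets M0 = sets (borel \<Otimes>\<^sub>M borel)"
  unfolding M0_def by (intro sets_pair_measure_cong) auto

lemma space_M0: "space M0 = UNIV"
  using sets_eq_imp_space_eq[OF sets_M0] by (simp add: space_pair_measure)

lemma space_noise[simp]: "space noise = UNIV"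
  unfolding noise_M0 space_PiM space_M0 by auto

lemma prob_space_noise: "prob_space noise"
  unfolding noise_M0 by (intro prob_space_PiM prob_space_M0)

lemma seq_space: "sequence_space M0"
proof -
  interpret prob_space M0 by (rule prob_space_M0)
  show ?thesis by unfold_locales
qed

lemma PiM_iter_noise: "distr (M0 \<Otimes>\<^sub>M noise) noise (\<lambda>(s, \<omega>). case_nat s \<omega>) = noise"
proof -
  interpret sequence_space M0 by (rule seq_space)
  show ?thesis unfolding noise_M0 by (rule PiM_iter)
qed

lemma comp_meas_M0: "(\<lambda>\<omega>. \<omega> n) \<in> noise \<rightarrow>\<^sub>M M0"
  unfolding noise_M0 by (rule measurable_component_singleton) simp

lemma comp_meas[measurable]: "(\<lambda>\<omega>. \<omega> n) \<in> noise \<rightarrow>\<^sub>M borel \<Otimes>\<^sub>M borel"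
  using comp_meas_M0 measurable_cong_sets[OF refl sets_M0] by blast

lemma distr_comp: "distr noise M0 (\<lambda>\<omega>. \<omega> n) = M0"
proof -
  interpret sequence_space M0 by (rule seq_space)
  show ?thesis unfolding noise_M0 by (rule PiM_component) simp
qed

context setting begin

lemma lq_gs:
  assumes w: "0 \<le> w"
  shows "lquantile K w u = -\<infinity> \<or> 0 \<le> lquantile K w u"
proof (cases "u \<le> 0")
  case True
  have "lquantile K w u = Inf UNIV" unfolding lquantile_def
    by (rule arg_cong[where f=Inf]) (use True in \<open>auto intro: order_trans[OF _ measure_nonneg]\<close>)
  then show ?thesis by (simp add: bot_ereal_def)
next
  case False
  interpret prob_space "K w" using K_prob w by auto
  have "0 \<le> lquantile K w u" unfolding lquantile_def
  proof (rule Inf_greatest)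
    fix y assume y: "y \<in> {y. u \<le> measure (K w) {..y}}"
    show "0 \<le> y"
    proof (rule ccontr)
      assume "\<not> 0 \<le> y"
      then have "{..y} \<subseteq> {..0}" by auto
      moreover have "{..0} \<in> sets (K w)" using K_prob w by auto
      ultimately have "measure (K w) {..y} \<le> measure (K w) {..0}" by (rule finite_measure_mono)
      moreover have "measure (K w) {..0} = 0" using K_pos w by (simp add: measure_def)
      ultimately show False using y False by simp
    qed
  qed
  then show ?thesis by simp
qed

lemma Sf_alt: "Sf b e r = Inf {s. 0 \<le> s \<and> s \<le> r \<and> e \<le> hazard b r s}"
  unfolding Sf_def by (rule arg_cong[where f=Inf]) auto

lemma cstep_eq:
  assumes "gs z"
  shows "cstep b K a (z, t) = (qstep b K a z, qtime b a z t)"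
proof (cases "z = 0 \<or> z = \<infinity>")
  case True then show ?thesis unfolding cstep_def qstep_def qtime_def by auto
next
  case False
  define r where "r = real_of_ereal z"
  have r0: "0 \<le> r" using assms False unfolding gs_def r_def by (cases z) auto
  obtain e u where a: "a = (e, u)" by (cases a)
  show ?thesis
  proof (cases "G r < e")
    case True
    then show ?thesis using False r0
      by (simp add: hazard_rr cstep_def qstep_def qtime_def a Let_def r_def[symmetric])
  next
    case c: False
    have Sm: "Sm b e r = Sf b e r" using c r0 unfolding Sm_def by simp
    have "Sf b e r \<le> r" using Sf_props(2)[of r e] c r0 by simp
    then have m: "max 0 (r - Sf b e r) = r - Sf b e r" by simp
    show ?thesis using False r0 c
      by (simp add: hazard_rr Sm m cstep_def qstep_def qtime_def a Let_def r_def[symmetric] Sf_alt[symmetric])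
  qed
qed

lemma gs_qstep:
  assumes "gs z"
  shows "gs (qstep b K a z)"
proof (cases "z = 0 \<or> z = \<infinity>")
  case True then show ?thesis using assms unfolding qstep_def by auto
next
  case False
  define r where "r = max 0 (real_of_ereal z)"
  obtain e u where a: "a = (e, u)" by (cases a)
  show ?thesis
  proof (cases "G r < e")
    case True
    then show ?thesis using False unfolding qstep_def a r_def[symmetric] gs_def by simp
  next
    case c: False
    define w where "w = max 0 (r - Sm b e r)"
    have w0: "0 \<le> w" unfolding w_def by simp
    have q: "qstep b K a z = ereal (r - Sm b e r) + lquantile K w u"
      using False c unfolding qstep_def a r_def[symmetric] w_def by simp
    have r0: "0 \<le> r" unfolding r_def by simp
    have "Sm b e r \<le> r" using Sf_props(2)[of r e] c r0 unfolding Sm_def by simp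
    then have "0 \<le> r - Sm b e r" by simp
    then show ?thesis unfolding q gs_def using lq_gs[OF w0, of u]
      by (cases "lquantile K w u") auto
  qed
qed

lemma gs_qchain: "gs z \<Longrightarrow> gs (qchain b K z \<omega> n)"
  by (induction n) (auto intro: gs_qstep)

lemma chain_eq:
  assumes "0 \<le> x"
  shows "chain b K x \<omega> n = (qchain b K (ereal x) \<omega> n, qtchain b K (ereal x) \<omega> n)"
proof (induction n)
  case 0 then show ?case by (simp add: zero_ereal_def)
next
  case (Suc n)
  have "gs (qchain b K (ereal x) \<omega> n)" by (rule gs_qchain) (use assms in \<open>simp add: gs_def\<close>)
  then show ?case using Suc by (simp add: cstep_eq)
qed

lemma qchain_meas: "(\<lambda>p. qchain b K (fst p) (snd p) n) \<in> borel_measurable (borel \<Otimes>\<^sub>M noise)"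
proof (induction n)
  case 0 then show ?case by simp
next
  case (Suc n)
  have "(\<lambda>p. snd p n) \<in> (borel \<Otimes>\<^sub>M noise) \<rightarrow>\<^sub>M borel \<Otimes>\<^sub>M borel"
    using measurable_compose[OF measurable_snd comp_meas] by simp
  then show ?case using Suc by simp
qed

lemma qchain_meas'[measurable]: "(\<lambda>\<omega>. qchain b K z \<omega> n) \<in> borel_measurable noise"
  using measurable_Pair2[OF qchain_meas] by simp

lemma qtchain_meas[measurable]: "(\<lambda>\<omega>. qtchain b K z \<omega> n) \<in> borel_measurable noise"
  by (induction n) simp_all

end


lemma qchain_Suc_shift: "qchain b K z \<omega> (Suc n) = qchain b K (qstep b K (\<omega> 0) z) (\<lambda>k. \<omega> (Suc k)) n"
  by (induction n) auto

lemma qchain_case_nat: "qchain b K z (case_nat a \<omega>) (Suc n) = qchain b K (qstep b K a z) \<omega> n"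
  by (simp only: qchain_Suc_shift) simp

lemma qchain_add: "qchain b K z \<omega> (n + m) = qchain b K (qchain b K z \<omega> n) (\<lambda>k. \<omega> (n + k)) m"
  by (induction m) auto

lemma shift_meas[measurable]: "(\<lambda>\<omega> k. \<omega> (n + k)) \<in> noise \<rightarrow>\<^sub>M noise"
  unfolding noise_M0
  by (rule measurable_PiM_single') (auto simp: space_PiM space_M0 intro: measurable_component_singleton)

lemma case_nat_meas: "(\<lambda>(a, \<omega>). case_nat a \<omega>) \<in> M0 \<Otimes>\<^sub>M noise \<rightarrow>\<^sub>M noise"
proof -
  have "(\<lambda>p. case_nat (fst p) (snd p)) \<in> M0 \<Otimes>\<^sub>M noise \<rightarrow>\<^sub>M noise"
    unfolding noise_M0
  proof (rule measurable_PiM_single')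
    fix i :: nat
    show "(\<lambda>p. case_nat (fst p) (snd p) i) \<in> M0 \<Otimes>\<^sub>M (\<Pi>\<^sub>M i\<in>UNIV. M0) \<rightarrow>\<^sub>M M0"
    proof (cases i)
      case 0 then show ?thesis by simp
    next
      case (Suc j)
      then show ?thesis using measurable_compose[OF measurable_snd measurable_component_singleton[of j UNIV "\<lambda>_. M0"]]
        by simp
    qed
  qed (auto simp: space_PiM space_M0 split: nat.split)
  then show ?thesis by (simp add: case_prod_beta')
qed

lemma sigma_finite_noise: "sigma_finite_measure noise"
proof -
  interpret prob_space noise by (rule prob_space_noise)
  show ?thesis by unfold_locales
qed

lemma nn_fst_noise:
  assumes "(\<lambda>p. g (fst p) (snd p)) \<in> borel_measurable (M0 \<Otimes>\<^sub>M noise)"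
  shows "(\<integral>\<^sup>+a. \<integral>\<^sup>+\<omega>. g a \<omega> \<partial>noise \<partial>M0) = (\<integral>\<^sup>+p. g (fst p) (snd p) \<partial>(M0 \<Otimes>\<^sub>M noise))"
  using sigma_finite_measure.nn_integral_fst[OF sigma_finite_noise assms] by simp

context setting begin

lemma qchain_meas_raw[measurable (raw)]:
  assumes "f \<in> borel_measurable M" "g \<in> M \<rightarrow>\<^sub>M noise"
  shows "(\<lambda>x. qchain b K (f x) (g x) n) \<in> borel_measurable M"
  using measurable_compose[OF measurable_Pair[OF assms] qchain_meas] by simp

lemma fst_M0_meas[measurable]: "fst \<in> M0 \<Otimes>\<^sub>M N \<rightarrow>\<^sub>M borel \<Otimes>\<^sub>M borel"
  using measurable_fst[of M0 N] measurable_cong_sets[OF refl sets_M0] by blast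

lemma markov:
  assumes P: "P \<in> sets (borel \<Otimes>\<^sub>M noise)"
  shows "emeasure noise {\<omega>. (qchain b K z \<omega> n, (\<lambda>k. \<omega> (n + k))) \<in> P} =
    (\<integral>\<^sup>+\<omega>. emeasure noise (Pair (qchain b K z \<omega> n) -` P) \<partial>noise)"
proof (induction n arbitrary: z)
  case 0
  interpret prob_space noise by (rule prob_space_noise)
  have "emeasure noise {\<omega>. (z, \<omega>) \<in> P} = emeasure noise (Pair z -` P)" by (simp add: vimage_def)
  moreover have "emeasure noise UNIV = 1" using emeasure_space_1 by simp
  ultimately show ?case by simp
next
  case (Suc n)
  define f where "f z' = emeasure noise (Pair z' -` P)" for z'
  have fm[measurable]: "f \<in> borel_measurable borel"
    unfolding f_def using sigma_finite_measure.measurable_emeasure_Pair[OF sigma_finite_noise P] .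
  define cn where "cn = (\<lambda>(a::real\<times>real, \<omega>::nat\<Rightarrow>real\<times>real). case_nat a \<omega>)"
  have cnm: "cn \<in> M0 \<Otimes>\<^sub>M noise \<rightarrow>\<^sub>M noise" unfolding cn_def by (rule case_nat_meas)
  define X where "X = {\<omega>. (qchain b K z \<omega> (Suc n), (\<lambda>k. \<omega> (Suc n + k))) \<in> P}"
  have "(\<lambda>\<omega>. (qchain b K z \<omega> (Suc n), \<lambda>k. \<omega> (Suc n + k))) \<in> noise \<rightarrow>\<^sub>M borel \<Otimes>\<^sub>M noise"
    by (rule measurable_Pair[OF qchain_meas' shift_meas])
  from measurable_sets[OF this P] have Xm: "X \<in> sets noise" unfolding X_def by (simp add: vimage_def)
  have "emeasure noise X = emeasure (distr (M0 \<Otimes>\<^sub>M noise) noise cn) X" by (simp only: cn_def PiM_iter_noise)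
  also have "\<dots> = emeasure (M0 \<Otimes>\<^sub>M noise) (cn -` X \<inter> space (M0 \<Otimes>\<^sub>M noise))"
    by (rule emeasure_distr[OF cnm Xm])
  also have "\<dots> = (\<integral>\<^sup>+a. emeasure noise (Pair a -` (cn -` X \<inter> space (M0 \<Otimes>\<^sub>M noise))) \<partial>M0)"
    by (rule sigma_finite_measure.emeasure_pair_measure_alt[OF sigma_finite_noise])
       (rule measurable_sets[OF cnm Xm])
  also have "\<dots> = (\<integral>\<^sup>+a. emeasure noise {\<omega>'. (qchain b K (qstep b K a z) \<omega>' n, \<lambda>k. \<omega>' (n + k)) \<in> P} \<partial>M0)"
    by (rule nn_integral_cong, rule arg_cong[where f="emeasure noise"])
       (auto simp: X_def cn_def qchain_case_nat space_pair_measure space_M0 simp del: qchain.simps(2))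
  also have "\<dots> = (\<integral>\<^sup>+a. \<integral>\<^sup>+\<omega>'. f (qchain b K (qstep b K a z) \<omega>' n) \<partial>noise \<partial>M0)"
    using Suc.IH by (simp add: f_def)
  also have "\<dots> = (\<integral>\<^sup>+p. f (qchain b K (qstep b K (fst p) z) (snd p) n) \<partial>(M0 \<Otimes>\<^sub>M noise))"
  proof -
    have h1: "(\<lambda>p. qstep b K (fst p) z) \<in> borel_measurable (M0 \<Otimes>\<^sub>M noise)"
      by (rule qstep_meas[OF fst_M0_meas measurable_const]) simp
    have h2: "(\<lambda>p. snd p) \<in> M0 \<Otimes>\<^sub>M noise \<rightarrow>\<^sub>M noise" by (rule measurable_snd)
    have m: "(\<lambda>p. f (qchain b K (qstep b K (fst p) z) (snd p) n)) \<in> borel_measurable (M0 \<Otimes>\<^sub>M noise)"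
      by (rule measurable_compose[OF qchain_meas_raw[OF h1 h2] fm])
    show ?thesis by (rule nn_fst_noise[where g="\<lambda>a \<omega>. f (qchain b K (qstep b K a z) \<omega> n)", OF m])
  qed
  also have "\<dots> = (\<integral>\<^sup>+p. f (qchain b K z (cn p) (Suc n)) \<partial>(M0 \<Otimes>\<^sub>M noise))"
    by (rule nn_integral_cong) (simp add: cn_def qchain_case_nat split_beta del: qchain.simps(2))
  also have "\<dots> = (\<integral>\<^sup>+\<omega>. f (qchain b K z \<omega> (Suc n)) \<partial>(distr (M0 \<Otimes>\<^sub>M noise) noise cn))"
  proof -
    have md: "(\<lambda>\<omega>. f (qchain b K z \<omega> (Suc n))) \<in> borel_measurable (distr (M0 \<Otimes>\<^sub>M noise) noise cn)"
      by (subst measurable_cong_sets[OF sets_distr refl]) (rule measurable_compose[OF qchain_meas' fm])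
    show ?thesis by (rule nn_integral_distr[symmetric, OF cnm md])
  qed
  also have "\<dots> = (\<integral>\<^sup>+\<omega>. f (qchain b K z \<omega> (Suc n)) \<partial>noise)"
    by (simp only: cn_def PiM_iter_noise)
  finally show ?case by (simp add: X_def f_def)
qed

end


abbreviation "Dexp \<equiv> density lborel (exponential_density 1)"
abbreviation "Uni \<equiv> uniform_measure lborel {0<..<(1::real)}"

lemma prob_Dexp: "prob_space Dexp" by (rule prob_space_exponential_density) simp
lemma prob_Uni: "prob_space Uni" by (rule prob_space_uniform_measure) auto

lemma Dexp_tail: assumes h: "0 \<le> h" shows "emeasure Dexp {h<..} = ennreal (exp (- h))"
proof -
  interpret prob_space Dexp by (rule prob_Dexp)
  have D: "distributed Dexp lborel (\<lambda>x. x) (exponential_density 1)"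
    unfolding distributed_def by (auto intro: distr_id2)
  have "prob {x \<in> space Dexp. h < x} = exp (- h * 1)"
    by (rule exponential_distributedD_gt[OF D h]) simp
  moreover have "{x \<in> space Dexp. h < x} = {h<..}" by auto
  ultimately show ?thesis by (simp add: emeasure_eq_measure)
qed

lemma M0_tail: assumes h: "0 \<le> h" shows "emeasure M0 {a. h < fst a} = ennreal (exp (- h))"
proof -
  interpret U: prob_space Uni by (rule prob_Uni)
  have "{a::real\<times>real. h < fst a} = {h<..} \<times> UNIV" by auto
  then have "emeasure M0 {a. h < fst a} = emeasure Dexp {h<..} * emeasure Uni UNIV"
    unfolding M0_def using U.emeasure_pair_measure_Times[of "{h<..}" Dexp UNIV] by simp
  also have "emeasure Uni UNIV = 1" using U.emeasure_space_1 by simp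
  finally show ?thesis using Dexp_tail[OF h] by simp
qed

lemma M0_UNIV: "emeasure M0 UNIV = 1"
  using prob_space.emeasure_space_1[OF prob_space_M0] by (simp add: space_M0)

lemma emeasure_comp0:
  assumes "A \<in> sets M0"
  shows "emeasure noise {\<omega>. \<omega> n \<in> A} = emeasure M0 A"
proof -
  have "emeasure M0 A = emeasure (distr noise M0 (\<lambda>\<omega>. \<omega> n)) A" by (simp only: distr_comp)
  also have "\<dots> = emeasure noise ((\<lambda>\<omega>. \<omega> n) -` A \<inter> space noise)"
    by (rule emeasure_distr[OF comp_meas_M0 assms])
  finally show ?thesis by (simp add: vimage_def)
qed

context setting begin

definition QA :: "real \<Rightarrow> ereal \<Rightarrow> real \<times> real \<Rightarrow> bool" where
  "QA M z a \<longleftrightarrow> 0 < z \<and> z < \<infinity> \<and> (real_of_ereal z \<le> M \<or> G (real_of_ereal z) - G M < fst a)"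

definition QC :: "ereal \<Rightarrow> real \<times> real \<Rightarrow> bool" where
  "QC z a \<longleftrightarrow> 0 < z \<and> z < \<infinity> \<and> G (real_of_ereal z) < fst a"

lemma QA_meas: "{p \<in> space (borel \<Otimes>\<^sub>M noise). QA M (fst p) (snd p 0)} \<in> sets (borel \<Otimes>\<^sub>M noise)"
  unfolding QA_def by measurable

lemma QC_meas: "{p \<in> space (borel \<Otimes>\<^sub>M noise). QC (fst p) (snd p 0)} \<in> sets (borel \<Otimes>\<^sub>M noise)"
  unfolding QC_def by measurable

lemma QA_slice_meas: "{a. QA M z a} \<in> sets M0"
proof -
  have "{a. QA M z a} = {a \<in> space (borel \<Otimes>\<^sub>M borel). QA M z a}" by (simp add: space_pair_measure)
  also have "\<dots> \<in> sets (borel \<Otimes>\<^sub>M borel)" unfolding QA_def by measurable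
  finally show ?thesis unfolding sets_M0 .
qed

lemma QC_slice_meas: "{a. QC z a} \<in> sets M0"
proof -
  have "{a. QC z a} = {a \<in> space (borel \<Otimes>\<^sub>M borel). QC z a}" by (simp add: space_pair_measure)
  also have "\<dots> \<in> sets (borel \<Otimes>\<^sub>M borel)" unfolding QC_def by measurable
  finally show ?thesis unfolding sets_M0 .
qed

lemma slice_ineq:
  assumes M: "0 \<le> M"
  shows "emeasure M0 {a. QA M z a} * ennreal (exp (- G M)) \<le> emeasure M0 {a. QC z a}"
proof (cases "0 < z \<and> z < \<infinity>")
  case False
  then have "{a. QA M z a} = {}" unfolding QA_def by auto
  then have "emeasure M0 {a. QA M z a} = 0" by (simp only: emeasure_empty)
  then show ?thesis by simp
next
  case True
  define r where "r = real_of_ereal z"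
  have QC: "{a. QC z a} = {a. G r < fst a}" using True unfolding QC_def r_def by auto
  have eC: "emeasure M0 {a. QC z a} = ennreal (exp (- G r))" unfolding QC by (rule M0_tail[OF G_nonneg])
  show ?thesis
  proof (cases "r \<le> M")
    case True2: True
    have "{a. QA M z a} = UNIV" using True True2 unfolding QA_def r_def by auto
    then have "emeasure M0 {a. QA M z a} = 1" by (simp add: M0_UNIV)
    moreover have "exp (- G M) \<le> exp (- G r)" using G_mono[OF True2] by simp
    ultimately show ?thesis using eC by (simp add: ennreal_leI)
  next
    case False2: False
    have "{a. QA M z a} = {a. G r - G M < fst a}" using True False2 unfolding QA_def r_def by auto
    moreover have "0 \<le> G r - G M" using G_mono[of M r] False2 by simp
    ultimately have "emeasure M0 {a. QA M z a} = ennreal (exp (- (G r - G M)))" using M0_tail by simp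
    moreover have "exp (- (G r - G M)) * exp (- G M) = exp (- G r)" by (simp add: exp_add[symmetric])
    ultimately show ?thesis using eC by (simp add: ennreal_mult''[symmetric])
  qed
qed

end


context setting begin

lemma slice_eq:
  assumes S: "\<And>z'. {a. Q z' a} \<in> sets M0"
  shows "emeasure noise (Pair z' -` {p \<in> space (borel \<Otimes>\<^sub>M noise). Q (fst p) (snd p 0)}) = emeasure M0 {a. Q z' a}"
proof -
  have eq: "Pair z' -` {p \<in> space (borel \<Otimes>\<^sub>M noise). Q (fst p) (snd p 0)} = {\<omega>'. \<omega>' 0 \<in> {a. Q z' a}}"
    by (auto simp: space_pair_measure)
  show ?thesis unfolding eq by (rule emeasure_comp0[OF S[of z']])
qed

lemma slice_fun_meas:
  assumes P: "{p \<in> space (borel \<Otimes>\<^sub>M noise). Q (fst p) (snd p 0)} \<in> sets (borel \<Otimes>\<^sub>M noise)"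
    and S: "\<And>z'. {a. Q z' a} \<in> sets M0"
  shows "(\<lambda>z'. emeasure M0 {a. Q z' a}) \<in> borel_measurable borel"
proof -
  have "(\<lambda>z'. emeasure noise (Pair z' -` {p \<in> space (borel \<Otimes>\<^sub>M noise). Q (fst p) (snd p 0)})) \<in> borel_measurable borel"
    by (rule sigma_finite_measure.measurable_emeasure_Pair[OF sigma_finite_noise P])
  then show ?thesis by (simp only: slice_eq[where Q=Q, OF S])
qed

lemma step_markov:
  assumes P: "{p \<in> space (borel \<Otimes>\<^sub>M noise). Q (fst p) (snd p 0)} \<in> sets (borel \<Otimes>\<^sub>M noise)"
    and S: "\<And>z'. {a. Q z' a} \<in> sets M0"
  shows "emeasure noise {\<omega>. Q (qchain b K z \<omega> n) (\<omega> n)} =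
    (\<integral>\<^sup>+\<omega>. emeasure M0 {a. Q (qchain b K z \<omega> n) a} \<partial>noise)"
proof -
  let ?P = "{p \<in> space (borel \<Otimes>\<^sub>M noise). Q (fst p) (snd p 0)}"
  have "{\<omega>. Q (qchain b K z \<omega> n) (\<omega> n)} = {\<omega>. (qchain b K z \<omega> n, (\<lambda>k. \<omega> (n + k))) \<in> ?P}"
    by (auto simp: space_pair_measure)
  also have "emeasure noise \<dots> = (\<integral>\<^sup>+\<omega>. emeasure noise (Pair (qchain b K z \<omega> n) -` ?P) \<partial>noise)"
    by (rule markov[OF P])
  also have "\<dots> = (\<integral>\<^sup>+\<omega>. emeasure M0 {a. Q (qchain b K z \<omega> n) a} \<partial>noise)"
    by (simp only: slice_eq[where Q=Q, OF S])
  finally show ?thesis .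
qed

lemma qstep_QC: "QC z a \<Longrightarrow> qstep b K a z = 0"
  unfolding QC_def qstep_def by (cases z) auto

lemma qchain_absorb0: "qchain b K z \<omega> n = 0 \<Longrightarrow> n \<le> m \<Longrightarrow> qchain b K z \<omega> m = 0"
proof (induction m)
  case 0 then show ?case by simp
next
  case (Suc m)
  then show ?case by (cases "n = Suc m") (auto simp: qstep_def)
qed

lemma qchain_absorbinf: "qchain b K z \<omega> n = \<infinity> \<Longrightarrow> n \<le> m \<Longrightarrow> qchain b K z \<omega> m = \<infinity>"
proof (induction m)
  case 0 then show ?case by simp
next
  case (Suc m)
  then show ?case by (cases "n = Suc m") (auto simp: qstep_def)
qed

lemma AE_finitely_A:
  assumes M: "0 \<le> M"
  shows "AE \<omega> in noise. eventually (\<lambda>n. \<not> QA M (qchain b K z \<omega> n) (\<omega> n)) sequentially"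
proof -
  interpret prob_space noise by (rule prob_space_noise)
  define A where "A n = {\<omega>. QA M (qchain b K z \<omega> n) (\<omega> n)}" for n
  define C where "C n = {\<omega>. QC (qchain b K z \<omega> n) (\<omega> n)}" for n
  define q where "q = exp (- G M)"
  have q0: "0 < q" unfolding q_def by simp
  have Am: "A n \<in> sets noise" for n
  proof -
    have "A n = {\<omega> \<in> space noise. QA M (qchain b K z \<omega> n) (\<omega> n)}" unfolding A_def by simp
    also have "\<dots> \<in> sets noise" unfolding QA_def by measurable
    finally show ?thesis .
  qed
  have Cm: "C n \<in> sets noise" for n
  proof -
    have "C n = {\<omega> \<in> space noise. QC (qchain b K z \<omega> n) (\<omega> n)}" unfolding C_def by simp
    also have "\<dots> \<in> sets noise" unfolding QC_def by measurable
    finally show ?thesis .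
  qed
  have AC: "emeasure noise (A n) * ennreal q \<le> emeasure noise (C n)" for n
  proof -
    have "emeasure noise (A n) * ennreal q = (\<integral>\<^sup>+\<omega>. emeasure M0 {a. QA M (qchain b K z \<omega> n) a} * ennreal q \<partial>noise)"
      unfolding A_def
      by (subst step_markov[OF QA_meas QA_slice_meas])
         (rule nn_integral_multc[symmetric], rule measurable_compose[OF qchain_meas' slice_fun_meas[OF QA_meas QA_slice_meas]])
    also have "\<dots> \<le> (\<integral>\<^sup>+\<omega>. emeasure M0 {a. QC (qchain b K z \<omega> n) a} \<partial>noise)"
      by (rule nn_integral_mono) (use slice_ineq[OF M] in \<open>simp add: q_def\<close>)
    also have "\<dots> = emeasure noise (C n)"
      unfolding C_def by (rule step_markov[OF QC_meas QC_slice_meas, symmetric])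
    finally show ?thesis .
  qed
  have ACm: "measure noise (A n) \<le> measure noise (C n) / q" for n
  proof -
    have "ennreal (measure noise (A n) * q) \<le> ennreal (measure noise (C n))"
      using AC[of n] q0 by (simp add: emeasure_eq_measure ennreal_mult''[symmetric])
    then have "measure noise (A n) * q \<le> measure noise (C n)"
      by (simp add: ennreal_le_iff)
    then show ?thesis using q0 by (simp add: field_simps)
  qed
  have disj: "disjoint_family C"
  unfolding disjoint_family_on_def
  proof (intro ballI impI)
    fix m n :: nat assume "m \<noteq> n"
    then consider "m < n" | "n < m" by linarith
    then show "C m \<inter> C n = {}"
    proof cases
      case 1
      show ?thesis
      proof (rule ccontr)
        assume "C m \<inter> C n \<noteq> {}"
        then obtain \<omega> where "\<omega> \<in> C m" "\<omega> \<in> C n" by blast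
        then have "qchain b K z \<omega> (Suc m) = 0" "0 < qchain b K z \<omega> n"
          unfolding C_def by (auto simp: qstep_QC QC_def)
        then show False using qchain_absorb0[of z \<omega> "Suc m" n] 1 by simp
      qed
    next
      case 2
      show ?thesis
      proof (rule ccontr)
        assume "C m \<inter> C n \<noteq> {}"
        then obtain \<omega> where "\<omega> \<in> C m" "\<omega> \<in> C n" by blast
        then have "qchain b K z \<omega> (Suc n) = 0" "0 < qchain b K z \<omega> m"
          unfolding C_def by (auto simp: qstep_QC QC_def)
        then show False using qchain_absorb0[of z \<omega> "Suc n" m] 2 by simp
      qed
    qed
  qed
  have "(\<lambda>n. measure noise (C n)) sums measure noise (\<Union>n. C n)"
    by (rule finite_measure_UNION) (use Cm disj in auto)
  then have sC: "summable (\<lambda>n. measure noise (C n))" by (rule sums_summable)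
  have sA: "summable (\<lambda>n. measure noise (A n))"
  proof (rule summable_comparison_test[OF _ summable_divide[OF sC, of q]])
    show "\<exists>N. \<forall>n\<ge>N. norm (measure noise (A n)) \<le> measure noise (C n) / q" using ACm by auto
  qed
  have "AE \<omega> in noise. eventually (\<lambda>n. \<omega> \<in> space noise - A n) sequentially"
    by (rule borel_cantelli_AE1[OF Am _ sA]) (simp add: emeasure_eq_measure)
  then show ?thesis unfolding A_def by simp
qed

end


lemma sigma_finite_Uni: "sigma_finite_measure Uni"
proof -
  interpret prob_space Uni by (rule prob_Uni)
  show ?thesis by unfold_locales
qed

lemma memoryless_lborel:
  assumes h: "0 \<le> h" and psi: "\<psi> \<in> borel_measurable borel"
  shows "(\<integral>\<^sup>+e. ennreal (exponential_density 1 e) * (indicator {h<..} e * \<psi> (e - h)) \<partial>lborel) =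
    ennreal (exp (- h)) * (\<integral>\<^sup>+e. ennreal (exponential_density 1 e) * \<psi> e \<partial>lborel)"
proof -
  let ?F = "\<lambda>e. ennreal (exponential_density 1 e) * (indicator {h<..} e * \<psi> (e - h))"
  have Fm: "?F \<in> borel_measurable borel" using psi by measurable
  have "(\<integral>\<^sup>+e. ?F e \<partial>lborel) = ennreal \<bar>1\<bar> * (\<integral>\<^sup>+x. ?F (h + 1 * x) \<partial>lborel)"
    by (rule nn_integral_real_affine[OF Fm]) simp
  also have "\<dots> = (\<integral>\<^sup>+x. ennreal (exp (- h)) * (ennreal (exponential_density 1 x) * \<psi> x) \<partial>lborel)"
  proof (simp, rule nn_integral_cong_AE)
    show "AE x in lborel. ennreal (exponential_density 1 (h + x)) * (indicator {h<..} (h + x) * \<psi> x) =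
        ennreal (exp (- h)) * (ennreal (exponential_density 1 x) * \<psi> x)"
      using AE_lborel_singleton[of 0]
    proof (rule AE_mp, intro AE_I2 impI)
      fix x :: real assume x: "x \<noteq> 0"
      show "ennreal (exponential_density 1 (h + x)) * (indicator {h<..} (h + x) * \<psi> x) =
        ennreal (exp (- h)) * (ennreal (exponential_density 1 x) * \<psi> x)"
      proof (cases "0 < x")
        case True
        have "exp (- (h + x)) = exp (- h) * exp (- x)" by (simp add: exp_add[symmetric])
        then show ?thesis using True h
          by (simp add: exponential_density_def ennreal_mult mult.assoc)
      next
        case False
        then show ?thesis using x by (simp add: exponential_density_def indicator_def)
      qed
    qed
  qed
  also have "\<dots> = ennreal (exp (- h)) * (\<integral>\<^sup>+e. ennreal (exponential_density 1 e) * \<psi> e \<partial>lborel)"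
    by (rule nn_integral_cmult) (use psi in measurable)
  finally show ?thesis by simp
qed

lemma memoryless_M0:
  assumes h: "0 \<le> h" and g: "g \<in> borel_measurable M0"
  shows "(\<integral>\<^sup>+a. indicator {a. h < fst a} a * g (fst a - h, snd a) \<partial>M0) = ennreal (exp (- h)) * (\<integral>\<^sup>+a. g a \<partial>M0)"
proof -
  have g2: "g \<in> borel_measurable (borel \<Otimes>\<^sub>M borel)" using g measurable_cong_sets[OF sets_M0 refl] by blast
  define \<psi> where "\<psi> e = (\<integral>\<^sup>+u. g (e, u) \<partial>Uni)" for e
  have gD: "g \<in> borel_measurable (Dexp \<Otimes>\<^sub>M Uni)" using g unfolding M0_def .
  have psim: "\<psi> \<in> borel_measurable borel"
  proof -
    have "\<psi> \<in> borel_measurable Dexp" unfolding \<psi>_def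
      by (rule sigma_finite_measure.borel_measurable_nn_integral_fst[OF sigma_finite_Uni gD])
    moreover have sD: "sets Dexp = sets borel" by simp
    ultimately show ?thesis using measurable_cong_sets[OF sD refl] by blast
  qed
  have g1: "(\<lambda>a. indicator {a. h < fst a} a * g (fst a - h, snd a)) \<in> borel_measurable (Dexp \<Otimes>\<^sub>M Uni)"
  proof -
    have "(\<lambda>a. indicator {a. h < fst a} a * g (fst a - h, snd a)) \<in> borel_measurable (borel \<Otimes>\<^sub>M borel)"
      using g2 by measurable
    then show ?thesis using measurable_cong_sets[OF sets_M0[unfolded M0_def] refl] by blast
  qed
  have ed: "(\<lambda>x. ennreal (exponential_density 1 x)) \<in> borel_measurable lborel" by measurable
  have psim3: "\<psi> \<in> borel_measurable lborel" using psim by simp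
  have psim2: "(\<lambda>e. indicator {h<..} e * \<psi> (e - h)) \<in> borel_measurable lborel"
    using psim by measurable
  have "(\<integral>\<^sup>+a. indicator {a. h < fst a} a * g (fst a - h, snd a) \<partial>M0) =
      (\<integral>\<^sup>+e. \<integral>\<^sup>+u. indicator {a. h < fst a} (e, u) * g (e - h, u) \<partial>Uni \<partial>Dexp)"
    unfolding M0_def using sigma_finite_measure.nn_integral_fst[OF sigma_finite_Uni g1] by (simp only: fst_conv snd_conv)
  also have "\<dots> = (\<integral>\<^sup>+e. indicator {h<..} e * \<psi> (e - h) \<partial>Dexp)"
  proof (rule nn_integral_cong)
    fix e
    have "(\<integral>\<^sup>+u. indicator {a. h < fst a} (e, u) * g (e - h, u) \<partial>Uni) = (\<integral>\<^sup>+u. indicator {h<..} e * g (e - h, u) \<partial>Uni)"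
      by (rule nn_integral_cong) (simp add: indicator_def)
    also have "\<dots> = indicator {h<..} e * \<psi> (e - h)" unfolding \<psi>_def
      by (rule nn_integral_cmult, rule measurable_Pair2[OF gD]) simp
    finally show "(\<integral>\<^sup>+u. indicator {a. h < fst a} (e, u) * g (e - h, u) \<partial>Uni) = indicator {h<..} e * \<psi> (e - h)" .
  qed
  also have "\<dots> = (\<integral>\<^sup>+e. ennreal (exponential_density 1 e) * (indicator {h<..} e * \<psi> (e - h)) \<partial>lborel)"
    by (rule nn_integral_density[OF ed psim2])
  also have "\<dots> = ennreal (exp (- h)) * (\<integral>\<^sup>+e. ennreal (exponential_density 1 e) * \<psi> e \<partial>lborel)"
    by (rule memoryless_lborel[OF h psim])
  also have "(\<integral>\<^sup>+e. ennreal (exponential_density 1 e) * \<psi> e \<partial>lborel) = (\<integral>\<^sup>+e. \<psi> e \<partial>Dexp)"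
    by (rule nn_integral_density[symmetric, OF ed psim3])
  also have "(\<integral>\<^sup>+e. \<psi> e \<partial>Dexp) = (\<integral>\<^sup>+a. g a \<partial>M0)"
    unfolding M0_def \<psi>_def using sigma_finite_measure.nn_integral_fst[OF sigma_finite_Uni gD] by (simp only: fst_conv snd_conv)
  finally show ?thesis .
qed

lemma case_nat_meas_raw:
  assumes F: "F \<in> M \<rightarrow>\<^sub>M M0" and S: "S \<in> M \<rightarrow>\<^sub>M noise"
  shows "(\<lambda>x. case_nat (F x) (S x)) \<in> M \<rightarrow>\<^sub>M noise"
  using measurable_compose[OF measurable_Pair[OF F S] case_nat_meas] by (simp only: case_prod_conv)

lemma cn_set_eq:
  "Pair a -` ((\<lambda>(a, \<omega>). case_nat a \<omega>) -` X \<inter> space (M0 \<Otimes>\<^sub>M noise)) = {\<omega>. case_nat a \<omega> \<in> X}"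
  by (auto simp: space_pair_measure space_M0)

lemma noise_via_M0:
  assumes X: "X \<in> sets noise"
  shows "emeasure noise X = (\<integral>\<^sup>+a. emeasure noise {\<omega>. case_nat a \<omega> \<in> X} \<partial>M0)"
proof -
  define cn where "cn = (\<lambda>(a::real\<times>real, \<omega>::nat\<Rightarrow>real\<times>real). case_nat a \<omega>)"
  have cnm: "cn \<in> M0 \<Otimes>\<^sub>M noise \<rightarrow>\<^sub>M noise" unfolding cn_def by (rule case_nat_meas)
  have "emeasure noise X = emeasure (distr (M0 \<Otimes>\<^sub>M noise) noise cn) X" by (simp only: cn_def PiM_iter_noise)
  also have "\<dots> = emeasure (M0 \<Otimes>\<^sub>M noise) (cn -` X \<inter> space (M0 \<Otimes>\<^sub>M noise))"
    by (rule emeasure_distr[OF cnm X])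
  also have "\<dots> = (\<integral>\<^sup>+a. emeasure noise (Pair a -` (cn -` X \<inter> space (M0 \<Otimes>\<^sub>M noise))) \<partial>M0)"
    by (rule sigma_finite_measure.emeasure_pair_measure_alt[OF sigma_finite_noise])
       (rule measurable_sets[OF cnm X])
  finally show ?thesis unfolding cn_def cn_set_eq .
qed

lemma noise_via_M0_meas:
  assumes X: "X \<in> sets noise"
  shows "(\<lambda>a. emeasure noise {\<omega>. case_nat a \<omega> \<in> X}) \<in> borel_measurable M0"
proof -
  have "(\<lambda>(a, \<omega>). case_nat a \<omega>) -` X \<inter> space (M0 \<Otimes>\<^sub>M noise) \<in> sets (M0 \<Otimes>\<^sub>M noise)"
    by (rule measurable_sets[OF case_nat_meas X])
  from sigma_finite_measure.measurable_emeasure_Pair[OF sigma_finite_noise this]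
  show ?thesis unfolding cn_set_eq .
qed

lemma restart_step:
  assumes h: "0 \<le> h" and N: "N \<in> sets noise"
  shows "emeasure noise {\<omega>. h < fst (\<omega> 0) \<and> case_nat (fst (\<omega> 0) - h, snd (\<omega> 0)) (\<lambda>k. \<omega> (Suc k)) \<in> N} =
    ennreal (exp (- h)) * emeasure noise N"
proof -
  define X where "X = {\<omega>. h < fst (\<omega> 0) \<and> case_nat (fst (\<omega> 0) - h, snd (\<omega> 0)) (\<lambda>k. \<omega> (Suc k)) \<in> N}"
  have F: "(\<lambda>\<omega>. (fst (\<omega> 0) - h, snd (\<omega> 0))) \<in> noise \<rightarrow>\<^sub>M M0"
  proof -
    have "(\<lambda>\<omega>. (fst (\<omega> 0) - h, snd (\<omega> 0))) \<in> noise \<rightarrow>\<^sub>M borel \<Otimes>\<^sub>M borel" by measurable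
    then show ?thesis using measurable_cong_sets[OF refl sets_M0] by blast
  qed
  have e1: "(\<lambda>\<omega> k. \<omega> (Suc k)) = (\<lambda>(\<omega>::nat \<Rightarrow> real \<times> real) k. \<omega> (1 + k))" by simp
  have S: "(\<lambda>\<omega> k. \<omega> (Suc k)) \<in> noise \<rightarrow>\<^sub>M noise" unfolding e1 by (rule shift_meas)
  have cm: "(\<lambda>\<omega>. case_nat (fst (\<omega> 0) - h, snd (\<omega> 0)) (\<lambda>k. \<omega> (Suc k))) \<in> noise \<rightarrow>\<^sub>M noise"
    by (rule case_nat_meas_raw[OF F S])
  have Xm: "X \<in> sets noise"
  proof -
    have "X = {\<omega> \<in> space noise. h < fst (\<omega> 0)} \<inter> ((\<lambda>\<omega>. case_nat (fst (\<omega> 0) - h, snd (\<omega> 0)) (\<lambda>k. \<omega> (Suc k))) -` N \<inter> space noise)"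
      unfolding X_def by auto
    moreover have "{\<omega> \<in> space noise. h < fst (\<omega> 0)} \<in> sets noise" by measurable
    moreover have "(\<lambda>\<omega>. case_nat (fst (\<omega> 0) - h, snd (\<omega> 0)) (\<lambda>k. \<omega> (Suc k))) -` N \<inter> space noise \<in> sets noise"
      by (rule measurable_sets[OF cm N])
    ultimately show ?thesis by (simp only: sets.Int)
  qed
  define gN where "gN a = emeasure noise {\<omega>. case_nat a \<omega> \<in> N}" for a
  have gNm: "gN \<in> borel_measurable M0" unfolding gN_def by (rule noise_via_M0_meas[OF N])
  have "emeasure noise X = (\<integral>\<^sup>+a. emeasure noise {\<omega>. case_nat a \<omega> \<in> X} \<partial>M0)"
    by (rule noise_via_M0[OF Xm])
  also have "\<dots> = (\<integral>\<^sup>+a. indicator {a. h < fst a} a * gN (fst a - h, snd a) \<partial>M0)"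
  proof (rule nn_integral_cong)
    fix a :: "real \<times> real"
    have "{\<omega>. case_nat a \<omega> \<in> X} = (if h < fst a then {\<omega>. case_nat (fst a - h, snd a) \<omega> \<in> N} else {})"
      unfolding X_def by auto
    then show "emeasure noise {\<omega>. case_nat a \<omega> \<in> X} = indicator {a. h < fst a} a * gN (fst a - h, snd a)"
      unfolding gN_def by (simp add: indicator_def)
  qed
  also have "\<dots> = ennreal (exp (- h)) * (\<integral>\<^sup>+a. gN a \<partial>M0)"
    by (rule memoryless_M0[OF h gNm])
  also have "(\<integral>\<^sup>+a. gN a \<partial>M0) = emeasure noise N"
    unfolding gN_def by (rule noise_via_M0[OF N, symmetric])
  finally show ?thesis unfolding X_def .
qed


context setting begin

lemma Sf_shift:
  assumes x0: "0 < x0" and r: "x0 \<le> r" and h: "h = G r - G x0" and e: "h < e" and e2: "e \<le> G r"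
  shows "Sf b e r = (r - x0) + Sf b (e - h) x0"
proof -
  define d where "d = r - x0"
  define A1 where "A1 = {s\<in>{0..r}. e \<le> hazard b r s}"
  define A0 where "A0 = {s\<in>{0..x0}. e - h \<le> hazard b x0 s}"
  have A1i: "s \<in> A1 \<longleftrightarrow> 0 \<le> s \<and> s \<le> r \<and> e \<le> G r - G (r - s)" for s
    unfolding A1_def using hazard_G[of s r] by auto
  have A0i: "s \<in> A0 \<longleftrightarrow> 0 \<le> s \<and> s \<le> x0 \<and> e - h \<le> G x0 - G (x0 - s)" for s
    unfolding A0_def using hazard_G[of s x0] by auto
  have rA1: "r \<in> A1" using A1i[of r] r x0 e2 G_neg[of 0] by simp
  have xA0: "x0 \<in> A0" using A0i[of x0] x0 e2 h G_neg[of 0] by simp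
  have bb1: "bdd_below A1" by (rule bdd_belowI[of _ 0]) (simp add: A1i)
  have bb0: "bdd_below A0" by (rule bdd_belowI[of _ 0]) (simp add: A0i)
  have to0: "s - d \<in> A0" if "s \<in> A1" for s
  proof -
    from that have s: "0 \<le> s" "s \<le> r" "e \<le> G r - G (r - s)" by (auto simp: A1i)
    have "G (r - s) < G x0" using s(3) e h by simp
    then have "r - s < x0" using G_mono[of x0 "r - s"] by (cases "r - s < x0") auto
    then show ?thesis using s h unfolding A0i d_def by (auto simp: algebra_simps)
  qed
  have to1: "s + d \<in> A1" if "s \<in> A0" for s
  proof -
    from that have s: "0 \<le> s" "s \<le> x0" "e - h \<le> G x0 - G (x0 - s)" by (auto simp: A0i)
    have "r - (s + d) = x0 - s" unfolding d_def by simp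
    then show ?thesis using s h r unfolding A1i d_def by auto
  qed
  have "Inf A1 \<le> d + Inf A0"
  proof -
    have "Inf A1 - d \<le> Inf A0"
    proof (rule cInf_greatest)
      show "A0 \<noteq> {}" using xA0 by blast
      fix s assume "s \<in> A0"
      then have "Inf A1 \<le> s + d" by (intro cInf_lower[OF to1 bb1])
      then show "Inf A1 - d \<le> s" by simp
    qed
    then show ?thesis by simp
  qed
  moreover have "d + Inf A0 \<le> Inf A1"
  proof (rule cInf_greatest)
    show "A1 \<noteq> {}" using rA1 by blast
    fix s assume "s \<in> A1"
    then have "Inf A0 \<le> s - d" by (intro cInf_lower[OF to0 bb0])
    then show "d + Inf A0 \<le> s" by simp
  qed
  ultimately show ?thesis unfolding Sf_def A1_def[symmetric] A0_def[symmetric] d_def by simp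
qed

lemma restart_qstep:
  assumes x0: "0 < x0" and z: "ereal x0 \<le> z" "z < \<infinity>"
    and e: "G (real_of_ereal z) - G x0 < e"
  shows "qstep b K (e, u) z = qstep b K (e - (G (real_of_ereal z) - G x0), u) (ereal x0)"
proof -
  obtain r where zr: "z = ereal r" using z by (cases z) auto
  have r: "x0 \<le> r" using z zr by simp
  define h where "h = G r - G x0"
  have nz: "z \<noteq> 0" "z \<noteq> \<infinity>" "ereal x0 \<noteq> 0" "ereal x0 \<noteq> \<infinity>" using zr r x0 by auto
  have mr: "max 0 r = r" "max 0 x0 = x0" using r x0 by auto
  show ?thesis
  proof (cases "G r < e")
    case True
    then have "G x0 < e - h" unfolding h_def by simp
    then show ?thesis using True nz unfolding qstep_def zr h_def by (simp add: mr)
  next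
    case False
    then have F2: "\<not> G x0 < e - h" unfolding h_def by simp
    have eh: "h < e" using e zr unfolding h_def by simp
    have Sr: "Sm b e r = Sf b e r" using False r x0 unfolding Sm_def by simp
    have S0: "Sm b (e - h) x0 = Sf b (e - h) x0" using F2 x0 unfolding Sm_def by simp
    have "Sf b e r = (r - x0) + Sf b (e - h) x0"
      by (rule Sf_shift[OF x0 r h_def eh]) (use False in simp)
    then have w: "r - Sm b e r = x0 - Sm b (e - h) x0" using Sr S0 by simp
    show ?thesis using False F2 nz unfolding qstep_def zr h_def[symmetric]
      by (simp add: mr w h_def[symmetric])
  qed
qed

definition QH :: "real \<Rightarrow> ereal \<Rightarrow> real \<times> real \<Rightarrow> bool" where
  "QH x0 z a \<longleftrightarrow> ereal x0 \<le> z \<and> z < \<infinity> \<and> G (real_of_ereal z) - G x0 < fst a"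

definition NN :: "real \<Rightarrow> (nat \<Rightarrow> real \<times> real) set" where
  "NN x0 = {\<omega>. \<forall>k. qchain b K (ereal x0) \<omega> k \<noteq> 0}"

definition P2 :: "real \<Rightarrow> (ereal \<times> (nat \<Rightarrow> real \<times> real)) set" where
  "P2 x0 = {p \<in> space (borel \<Otimes>\<^sub>M noise). QH x0 (fst p) (snd p 0) \<and>
     case_nat (fst (snd p 0) - (G (real_of_ereal (fst p)) - G x0), snd (snd p 0)) (\<lambda>k. snd p (Suc k)) \<in> NN x0}"

lemma NN_meas: "NN x0 \<in> sets noise"
proof -
  have "NN x0 = {\<omega> \<in> space noise. \<forall>k. qchain b K (ereal x0) \<omega> k \<noteq> 0}" unfolding NN_def by simp
  also have "\<dots> \<in> sets noise" by measurable
  finally show ?thesis .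
qed

lemma QH_meas: "{p \<in> space (borel \<Otimes>\<^sub>M noise). QH x0 (fst p) (snd p 0)} \<in> sets (borel \<Otimes>\<^sub>M noise)"
  unfolding QH_def by measurable

lemma QH_slice_meas: "{a. QH x0 z a} \<in> sets M0"
proof -
  have "{a. QH x0 z a} = {a \<in> space (borel \<Otimes>\<^sub>M borel). QH x0 z a}" by (simp add: space_pair_measure)
  also have "\<dots> \<in> sets (borel \<Otimes>\<^sub>M borel)" unfolding QH_def by measurable
  finally show ?thesis unfolding sets_M0 .
qed

lemma P2_meas: "P2 x0 \<in> sets (borel \<Otimes>\<^sub>M noise)"
proof -
  have F: "(\<lambda>p. (fst (snd p 0) - (G (real_of_ereal (fst p)) - G x0), snd (snd p 0))) \<in> (borel \<Otimes>\<^sub>M noise) \<rightarrow>\<^sub>M M0"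
  proof -
    have "(\<lambda>p. (fst (snd p 0) - (G (real_of_ereal (fst p)) - G x0), snd (snd p 0))) \<in> (borel \<Otimes>\<^sub>M noise) \<rightarrow>\<^sub>M borel \<Otimes>\<^sub>M borel"
      by measurable
    then show ?thesis using measurable_cong_sets[OF refl sets_M0] by blast
  qed
  have e1: "(\<lambda>\<omega> k. \<omega> (Suc k)) = (\<lambda>(\<omega>::nat \<Rightarrow> real \<times> real) k. \<omega> (1 + k))" by simp
  have S1: "(\<lambda>\<omega> k. \<omega> (Suc k)) \<in> noise \<rightarrow>\<^sub>M noise" unfolding e1 by (rule shift_meas)
  have S: "(\<lambda>p k. snd p (Suc k)) \<in> (borel \<Otimes>\<^sub>M noise) \<rightarrow>\<^sub>M noise"
    using measurable_compose[OF measurable_snd[of borel noise] S1] .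
  have cm: "(\<lambda>p. case_nat (fst (snd p 0) - (G (real_of_ereal (fst p)) - G x0), snd (snd p 0)) (\<lambda>k. snd p (Suc k)))
      \<in> (borel \<Otimes>\<^sub>M noise) \<rightarrow>\<^sub>M noise"
    by (rule case_nat_meas_raw[OF F S])
  have "P2 x0 = {p \<in> space (borel \<Otimes>\<^sub>M noise). QH x0 (fst p) (snd p 0)} \<inter>
     ((\<lambda>p. case_nat (fst (snd p 0) - (G (real_of_ereal (fst p)) - G x0), snd (snd p 0)) (\<lambda>k. snd p (Suc k))) -` NN x0
       \<inter> space (borel \<Otimes>\<^sub>M noise))"
    unfolding P2_def by auto
  moreover have "(\<lambda>p. case_nat (fst (snd p 0) - (G (real_of_ereal (fst p)) - G x0), snd (snd p 0)) (\<lambda>k. snd p (Suc k))) -` NN x0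
       \<inter> space (borel \<Otimes>\<^sub>M noise) \<in> sets (borel \<Otimes>\<^sub>M noise)"
    by (rule measurable_sets[OF cm NN_meas])
  ultimately show ?thesis using QH_meas by (simp only: sets.Int)
qed

lemma P2_slice:
  assumes x0: "0 < x0"
  shows "emeasure noise (Pair z' -` P2 x0) = emeasure M0 {a. QH x0 z' a} * emeasure noise (NN x0)"
proof (cases "ereal x0 \<le> z' \<and> z' < \<infinity>")
  case False
  then have "Pair z' -` P2 x0 = {}" "{a. QH x0 z' a} = {}" unfolding P2_def QH_def by auto
  then show ?thesis by (simp only: emeasure_empty) simp
next
  case True
  define h where "h = G (real_of_ereal z') - G x0"
  have h0: "0 \<le> h" unfolding h_def using True G_mono[of x0 "real_of_ereal z'"]
    by (cases z') auto
  have "Pair z' -` P2 x0 = {\<omega>. h < fst (\<omega> 0) \<and> case_nat (fst (\<omega> 0) - h, snd (\<omega> 0)) (\<lambda>k. \<omega> (Suc k)) \<in> NN x0}"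
    unfolding P2_def QH_def h_def using True by (auto simp: space_pair_measure)
  then have "emeasure noise (Pair z' -` P2 x0) = ennreal (exp (- h)) * emeasure noise (NN x0)"
    using restart_step[OF h0 NN_meas] by simp
  moreover have "{a. QH x0 z' a} = {a. h < fst a}" unfolding QH_def h_def using True by auto
  ultimately show ?thesis using M0_tail[OF h0] by simp
qed

lemma restart_prob:
  assumes x0: "0 < x0"
  shows "emeasure noise {\<omega>. (qchain b K z \<omega> n, (\<lambda>k. \<omega> (n + k))) \<in> P2 x0} =
    emeasure noise {\<omega>. QH x0 (qchain b K z \<omega> n) (\<omega> n)} * emeasure noise (NN x0)"
proof -
  have "emeasure noise {\<omega>. (qchain b K z \<omega> n, (\<lambda>k. \<omega> (n + k))) \<in> P2 x0} =
      (\<integral>\<^sup>+\<omega>. emeasure noise (Pair (qchain b K z \<omega> n) -` P2 x0) \<partial>noise)"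
    by (rule markov[OF P2_meas])
  also have "\<dots> = (\<integral>\<^sup>+\<omega>. emeasure M0 {a. QH x0 (qchain b K z \<omega> n) a} * emeasure noise (NN x0) \<partial>noise)"
    by (simp only: P2_slice[OF x0])
  also have "\<dots> = (\<integral>\<^sup>+\<omega>. emeasure M0 {a. QH x0 (qchain b K z \<omega> n) a} \<partial>noise) * emeasure noise (NN x0)"
    by (rule nn_integral_multc, rule measurable_compose[OF qchain_meas' slice_fun_meas[OF QH_meas QH_slice_meas]])
  also have "(\<integral>\<^sup>+\<omega>. emeasure M0 {a. QH x0 (qchain b K z \<omega> n) a} \<partial>noise) = emeasure noise {\<omega>. QH x0 (qchain b K z \<omega> n) (\<omega> n)}"
    by (rule step_markov[OF QH_meas QH_slice_meas, symmetric])
  finally show ?thesis .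
qed

lemma restart_subset:
  assumes x0: "0 < x0" and p: "(qchain b K z \<omega> n, (\<lambda>k. \<omega> (n + k))) \<in> P2 x0"
  shows "qchain b K z \<omega> k \<noteq> 0"
proof -
  define zn where "zn = qchain b K z \<omega> n"
  define h where "h = G (real_of_ereal zn) - G x0"
  define \<omega>' where "\<omega>' = case_nat (fst (\<omega> n) - h, snd (\<omega> n)) (\<lambda>j. \<omega> (Suc n + j))"
  have QH: "QH x0 zn (\<omega> n)" and N: "\<omega>' \<in> NN x0"
    using p unfolding P2_def zn_def[symmetric] h_def[symmetric] \<omega>'_def by (simp_all add: space_pair_measure h_def)
  have zn: "ereal x0 \<le> zn" "zn < \<infinity>" "h < fst (\<omega> n)" using QH unfolding QH_def h_def by auto
  show ?thesis
  proof (cases "k \<le> n")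
    case True
    show ?thesis
    proof
      assume "qchain b K z \<omega> k = 0"
      then have "zn = 0" unfolding zn_def using qchain_absorb0 True by blast
      then show False using zn x0 by simp
    qed
  next
    case False
    then obtain j where k: "k = Suc n + j" by (metis add_Suc less_imp_Suc_add not_le)
    have "qchain b K z \<omega> (Suc n) = qstep b K (\<omega> n) zn" by (simp add: zn_def)
    also have "\<dots> = qstep b K (fst (\<omega> n) - h, snd (\<omega> n)) (ereal x0)"
      using restart_qstep[OF x0 zn(1,2), of "fst (\<omega> n)" "snd (\<omega> n)"] zn(3) unfolding h_def by simp
    finally have s1: "qchain b K z \<omega> (Suc n) = qstep b K (\<omega>' 0) (ereal x0)" by (simp add: \<omega>'_def)
    have "qchain b K z \<omega> k = qchain b K (qchain b K z \<omega> (Suc n)) (\<lambda>i. \<omega> (Suc n + i)) j"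
      unfolding k by (rule qchain_add)
    also have "\<dots> = qchain b K (ereal x0) \<omega>' (Suc j)"
      unfolding qchain_Suc_shift[of _ _ _ \<omega>'] s1 by (simp add: \<omega>'_def)
    finally have eq: "qchain b K z \<omega> k = qchain b K (ereal x0) \<omega>' (Suc j)" .
    have "qchain b K (ereal x0) \<omega>' (Suc j) \<noteq> 0" using N unfolding NN_def by blast
    then show ?thesis unfolding eq .
  qed
qed

end


context setting begin

definition dlt :: "ereal \<Rightarrow> real \<times> real \<Rightarrow> real" where
  "dlt z a = (if G (max 0 (real_of_ereal z)) < fst a then max 0 (real_of_ereal z)
     else Sm b (fst a) (max 0 (real_of_ereal z)))"

lemma qtime_dlt: "qtime b a z t = (if z = 0 \<or> z = \<infinity> then \<infinity> else t + ereal (dlt z a))"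
  unfolding qtime_def dlt_def by simp

lemma dlt_bounds: "0 \<le> dlt z a \<and> dlt z a \<le> max 0 (real_of_ereal z)"
proof (cases "G (max 0 (real_of_ereal z)) < fst a")
  case True then show ?thesis unfolding dlt_def by simp
next
  case False
  then have "Sm b (fst a) (max 0 (real_of_ereal z)) = Sf b (fst a) (max 0 (real_of_ereal z))"
    unfolding Sm_def by simp
  then show ?thesis unfolding dlt_def using False Sf_props(1,2)[of "max 0 (real_of_ereal z)" "fst a"] by simp
qed

lemma qstep_not_absorbed: "z \<noteq> 0 \<Longrightarrow> z \<noteq> \<infinity> \<Longrightarrow>
  qstep b K a z = (if G (max 0 (real_of_ereal z)) < fst a then 0 else
     ereal (max 0 (real_of_ereal z) - dlt z a) + lquantile K (max 0 (max 0 (real_of_ereal z) - dlt z a)) (snd a))"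
  unfolding qstep_def dlt_def by simp

end

locale path = setting +
  fixes x :: real and \<omega> :: "nat \<Rightarrow> real \<times> real"
  assumes x0: "0 \<le> x"
begin

abbreviation "Z n \<equiv> qchain b K (ereal x) \<omega> n"
abbreviation "T n \<equiv> qtchain b K (ereal x) \<omega> n"

lemma gsZ: "gs (Z n)" by (rule gs_qchain) (use x0 in \<open>simp add: gs_def\<close>)

lemma T_Suc: "T (Suc n) = (if Z n = 0 \<or> Z n = \<infinity> then \<infinity> else T n + ereal (dlt (Z n) (\<omega> n)))"
  by (simp add: qtime_dlt)

lemma T_nonneg: "0 \<le> T n"
proof (induction n)
  case (Suc n)
  then show ?case using dlt_bounds[of "Z n" "\<omega> n"] by (auto simp: qtime_dlt)
qed simp

lemma T_mono_Suc: "T n \<le> T (Suc n)"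
  using dlt_bounds[of "Z n" "\<omega> n"] T_nonneg[of n] by (cases "T n") (auto simp: qtime_dlt)

lemma T_mono: "m \<le> n \<Longrightarrow> T m \<le> T n"
proof (induction n)
  case (Suc n)
  then show ?case using T_mono_Suc[of n] by (auto simp: le_Suc_eq simp del: qtchain.simps)
qed simp

lemma T_fin: "(\<forall>k<n. Z k \<noteq> 0 \<and> Z k \<noteq> \<infinity>) \<Longrightarrow> T n < \<infinity>"
proof (induction n)
  case (Suc n)
  then have "T n < \<infinity>" "Z n \<noteq> 0" "Z n \<noteq> \<infinity>" by auto
  then show ?case by (simp add: qtime_dlt)
qed simp

lemma Z_minf_T: "Z n = -\<infinity> \<Longrightarrow> T (Suc n) = T n"
proof -
  assume z: "Z n = -\<infinity>"
  then have "dlt (Z n) (\<omega> n) = 0" using dlt_bounds[of "Z n" "\<omega> n"] by simp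
  then show ?thesis using z by (simp add: qtime_dlt zero_ereal_def[symmetric])
qed

lemma contour_at:
  assumes t: "ereal t < T (Suc m)" "T m \<le> ereal t"
  shows "contour b K x \<omega> t = (if Z m = \<infinity> then \<infinity> else if Z m = 0 then 0 else Z m - (ereal t - T m))"
proof -
  have L: "(LEAST n. ereal t < T (Suc n)) = m"
  proof (rule Least_equality)
    show "ereal t < T (Suc m)" by (rule t(1))
    fix k assume k: "ereal t < T (Suc k)"
    show "m \<le> k"
    proof (rule ccontr)
      assume "\<not> m \<le> k"
      then have "T (Suc k) \<le> T m" by (intro T_mono) simp
      then show False using k t(2) by simp
    qed
  qed
  have ex: "\<exists>n. ereal t < T (Suc n)" using t(1) by blast
  show ?thesis unfolding contour_def chain_eq[OF x0] prod.sel using ex by (simp only: L Let_def if_True)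
qed

lemma contour_none:
  assumes "\<forall>n. \<not> ereal t < T (Suc n)"
  shows "contour b K x \<omega> t = \<infinity>"
  unfolding contour_def chain_eq[OF x0] prod.sel using assms by simp

lemma contour_cases:
  assumes t: "0 \<le> t"
  shows "(\<forall>n. \<not> ereal t < T (Suc n)) \<or> (\<exists>m. ereal t < T (Suc m) \<and> T m \<le> ereal t)"
proof (cases "\<exists>n. ereal t < T (Suc n)")
  case True
  define m where "m = (LEAST n. ereal t < T (Suc n))"
  have m: "ereal t < T (Suc m)" unfolding m_def using True by (metis LeastI)
  have "T m \<le> ereal t"
  proof (cases m)
    case 0 then show ?thesis using t by simp
  next
    case (Suc k)
    then have "\<not> ereal t < T (Suc k)" using not_less_Least[of k "\<lambda>n. ereal t < T (Suc n)"] m_def by simp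
    then show ?thesis using Suc by simp
  qed
  then show ?thesis using m by blast
qed simp

lemma interval_pos:
  assumes t: "ereal t < T (Suc m)" "T m \<le> ereal t" and nz: "Z m \<noteq> 0" "Z m \<noteq> \<infinity>"
  shows "\<exists>\<rho> \<tau>. Z m = ereal \<rho> \<and> 0 < \<rho> \<and> T m = ereal \<tau> \<and> \<tau> \<le> t \<and> t < \<tau> + dlt (Z m) (\<omega> m) \<and>
     dlt (Z m) (\<omega> m) \<le> \<rho>"
proof -
  have Tf: "T m < \<infinity>" using t by (auto simp: qtime_dlt)
  obtain \<tau> where \<tau>: "T m = ereal \<tau>" using Tf T_nonneg[of m] by (cases "T m") auto
  have "Z m \<noteq> -\<infinity>" using Z_minf_T[of m] t by auto
  then obtain \<rho> where \<rho>: "Z m = ereal \<rho>" "0 < \<rho>" using gsZ[of m] nz unfolding gs_def by (cases "Z m") auto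
  have "t < \<tau> + dlt (Z m) (\<omega> m)" using t nz \<tau> by (simp add: qtime_dlt)
  moreover have "dlt (Z m) (\<omega> m) \<le> \<rho>" using dlt_bounds[of "Z m" "\<omega> m"] \<rho> by simp
  ultimately show ?thesis using \<rho> \<tau> t by auto
qed

lemma contour_zero_iff:
  assumes t: "0 \<le> t"
  shows "contour b K x \<omega> t = 0 \<Longrightarrow> \<exists>n. Z n = 0"
proof -
  assume c: "contour b K x \<omega> t = 0"
  from contour_cases[OF t] show ?thesis
  proof
    assume "\<forall>n. \<not> ereal t < T (Suc n)"
    then show ?thesis using c contour_none by simp
  next
    assume "\<exists>m. ereal t < T (Suc m) \<and> T m \<le> ereal t"
    then obtain m where m: "ereal t < T (Suc m)" "T m \<le> ereal t" by blast
    show ?thesis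
    proof (rule ccontr)
      assume nz: "\<not> ?thesis"
      then have nz0: "Z m \<noteq> 0" by blast
      show False
      proof (cases "Z m = \<infinity>")
        case True then show False using c contour_at[OF m] by simp
      next
        case False
        from interval_pos[OF m nz0 False] obtain \<rho> \<tau> where
          r: "Z m = ereal \<rho>" "0 < \<rho>" "T m = ereal \<tau>" "\<tau> \<le> t" "t < \<tau> + dlt (Z m) (\<omega> m)" "dlt (Z m) (\<omega> m) \<le> \<rho>"
          by blast
        have "contour b K x \<omega> t = ereal (\<rho> - (t - \<tau>))" using contour_at[OF m] r nz0 False by simp
        then show False using c r by simp
      qed
    qed
  qed
qed

lemma T_Suc_fin: "Z m \<noteq> 0 \<Longrightarrow> Z m \<noteq> \<infinity> \<Longrightarrow> T m = ereal \<tau> \<Longrightarrow> T (Suc m) = ereal (\<tau> + dlt (Z m) (\<omega> m))"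
  by (simp add: qtime_dlt)

lemma first_absorb:
  assumes "Z n = 0 \<or> Z n = \<infinity>"
  obtains n0 where "Z n0 = 0 \<or> Z n0 = \<infinity>" "\<forall>k<n0. Z k \<noteq> 0 \<and> Z k \<noteq> \<infinity>" "\<exists>\<tau>. T n0 = ereal \<tau> \<and> 0 \<le> \<tau>"
proof -
  define n0 where "n0 = (LEAST n. Z n = 0 \<or> Z n = \<infinity>)"
  have a: "Z n0 = 0 \<or> Z n0 = \<infinity>" unfolding n0_def using assms by (rule LeastI)
  have b: "\<forall>k<n0. Z k \<noteq> 0 \<and> Z k \<noteq> \<infinity>" unfolding n0_def using not_less_Least by blast
  have "T n0 < \<infinity>" using T_fin b by blast
  then have "\<exists>\<tau>. T n0 = ereal \<tau> \<and> 0 \<le> \<tau>" using T_nonneg[of n0] by (cases "T n0") auto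
  then show ?thesis using that a b by blast
qed

lemma tau0_fin_iff: "tau0 b K x \<omega> < \<infinity> \<longleftrightarrow> (\<exists>n. Z n = 0)"
proof
  assume tf: "tau0 b K x \<omega> < \<infinity>"
  have "{ereal r | r. 0 \<le> r \<and> contour b K x \<omega> r = 0} \<noteq> {}"
  proof (rule ccontr)
    assume e: "\<not> {ereal r | r. 0 \<le> r \<and> contour b K x \<omega> r = 0} \<noteq> {}"
    have "tau0 b K x \<omega> = Inf {}" unfolding tau0_def using e by (simp only: not_not)
    then show False using tf by (simp add: top_ereal_def)
  qed
  then obtain r where "0 \<le> r" "contour b K x \<omega> r = 0" by blast
  then show "\<exists>n. Z n = 0" using contour_zero_iff by blast
next
  assume "\<exists>n. Z n = 0"
  then obtain n where "Z n = 0" by blast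
  then obtain n0 where n0: "Z n0 = 0 \<or> Z n0 = \<infinity>" "\<forall>k<n0. Z k \<noteq> 0 \<and> Z k \<noteq> \<infinity>" "\<exists>\<tau>. T n0 = ereal \<tau> \<and> 0 \<le> \<tau>"
    using first_absorb by blast
  obtain \<tau> where \<tau>: "T n0 = ereal \<tau>" "0 \<le> \<tau>" using n0(3) by blast
  have z0: "Z n0 = 0"
  proof (rule ccontr)
    assume "Z n0 \<noteq> 0"
    then have "Z n0 = \<infinity>" using n0 by simp
    then have "Z n = \<infinity>" if "n0 \<le> n" for n using qchain_absorbinf that by blast
    moreover have "n0 \<le> n" using n0(2) \<open>Z n = 0\<close> not_le by blast
    ultimately show False using \<open>Z n = 0\<close> by simp
  qed
  have TS: "T (Suc n0) = \<infinity>" using z0 by (simp add: qtime_dlt)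
  have "contour b K x \<omega> \<tau> = 0" using contour_at[of \<tau> n0] TS \<tau> z0 by simp
  then have "tau0 b K x \<omega> \<le> ereal \<tau>" unfolding tau0_def using \<tau> by (intro Inf_lower) auto
  then show "tau0 b K x \<omega> < \<infinity>" by (rule order.strict_trans1) simp
qed

lemma hit_QH:
  assumes y: "0 < y" and t: "0 < t" and c: "contour b K x \<omega> t = ereal y"
  shows "\<exists>m. QH y (Z m) (\<omega> m)"
proof -
  have "(\<forall>n. \<not> ereal t < T (Suc n)) \<or> (\<exists>m. ereal t < T (Suc m) \<and> T m \<le> ereal t)"
    using contour_cases[of t] t by simp
  then show ?thesis
  proof
    assume "\<forall>n. \<not> ereal t < T (Suc n)"
    then show ?thesis using c contour_none by simp
  next
    assume "\<exists>m. ereal t < T (Suc m) \<and> T m \<le> ereal t"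
    then obtain m where m: "ereal t < T (Suc m)" "T m \<le> ereal t" by blast
    have ninf: "Z m \<noteq> \<infinity>" using c contour_at[OF m] by auto
    have n0: "Z m \<noteq> 0" using c contour_at[OF m] y by auto
    from interval_pos[OF m n0 ninf] obtain \<rho> \<tau> where
      r: "Z m = ereal \<rho>" "0 < \<rho>" "T m = ereal \<tau>" "\<tau> \<le> t" "t < \<tau> + dlt (Z m) (\<omega> m)" "dlt (Z m) (\<omega> m) \<le> \<rho>"
      by blast
    have "contour b K x \<omega> t = ereal (\<rho> - (t - \<tau>))" using contour_at[OF m] r n0 ninf by simp
    then have yv: "y = \<rho> - (t - \<tau>)" using c by simp
    define e where "e = fst (\<omega> m)"
    define d where "d = t - \<tau>"
    have d: "0 \<le> d" "d < dlt (Z m) (\<omega> m)" "y = \<rho> - d" using r yv unfolding d_def by auto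
    have mr: "max 0 (real_of_ereal (Z m)) = \<rho>" using r by simp
    have "G \<rho> - G y < e"
    proof (cases "G \<rho> < e")
      case True then show ?thesis using G_nonneg[of y] by simp
    next
      case False
      have dl: "dlt (Z m) (\<omega> m) = Sf b e \<rho>" unfolding dlt_def mr e_def[symmetric] using False r(2)
        by (simp add: Sm_def)
      have "hazard b \<rho> d < e" using Sf_props(4)[of \<rho> e d] False r(2) d dl by simp
      moreover have "hazard b \<rho> d = G \<rho> - G (\<rho> - d)" using d r dl Sf_props(2)[of \<rho> e] False
        by (intro hazard_G) auto
      ultimately show ?thesis using d by simp
    qed
    then have "QH y (Z m) (\<omega> m)" unfolding QH_def e_def using r d by simp
    then show ?thesis by blast
  qed
qed

end


context path begin

definition Tp :: bool where
  "Tp \<longleftrightarrow> (\<exists>n. Z n = 0 \<or> Z n = \<infinity>) \<or> (\<exists>B::nat. \<forall>n. T n \<le> ereal (real B)) \<or>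
     (\<forall>M::nat. \<exists>N. \<forall>n\<ge>N. T n < T (Suc n) \<longrightarrow> ereal (real M) \<le> Z n - (T (Suc n) - T n))"

lemma tendsto_of_nat_bounds:
  assumes "\<And>M::nat. eventually (\<lambda>t. ereal (real M) \<le> f t) at_top"
  shows "(f \<longlongrightarrow> \<infinity>) at_top"
proof (subst tendsto_PInfty, intro allI)
  fix r :: real
  obtain M :: nat where M: "r < real M" using reals_Archimedean2 by blast
  show "eventually (\<lambda>t. ereal r < f t) at_top"
    using assms[of M] by eventually_elim (use M in \<open>auto intro: less_le_trans[of _ "ereal (real M)"]\<close>)
qed

lemma H_inf:
  assumes "\<exists>n. Z n = \<infinity>" and nz: "\<forall>n. Z n \<noteq> 0"
  shows "((\<lambda>t. contour b K x \<omega> t) \<longlongrightarrow> \<infinity>) at_top"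
proof -
  from assms obtain n where "Z n = 0 \<or> Z n = \<infinity>" by blast
  then obtain n0 where n0: "Z n0 = 0 \<or> Z n0 = \<infinity>" "\<forall>k<n0. Z k \<noteq> 0 \<and> Z k \<noteq> \<infinity>" "\<exists>\<tau>. T n0 = ereal \<tau> \<and> 0 \<le> \<tau>"
    using first_absorb by blast
  obtain \<tau> where \<tau>: "T n0 = ereal \<tau>" "0 \<le> \<tau>" using n0(3) by blast
  have zi: "Z n0 = \<infinity>" using n0(1) nz by blast
  have TS: "T (Suc n0) = \<infinity>" using zi by (simp add: qtime_dlt)
  have "eventually (\<lambda>t. contour b K x \<omega> t = \<infinity>) at_top"
    unfolding eventually_at_top_linorder
  proof (intro exI allI impI)
    fix t assume "\<tau> \<le> t"
    then show "contour b K x \<omega> t = \<infinity>" using contour_at[of t n0] TS \<tau> zi by simp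
  qed
  then show ?thesis by (rule tendsto_eventually)
qed

lemma H_bdd:
  assumes "\<forall>n. T n \<le> ereal B"
  shows "((\<lambda>t. contour b K x \<omega> t) \<longlongrightarrow> \<infinity>) at_top"
proof -
  have "eventually (\<lambda>t. contour b K x \<omega> t = \<infinity>) at_top"
    unfolding eventually_at_top_dense
  proof (intro exI allI impI)
    fix t assume "B < t"
    have "\<forall>n. \<not> ereal t < T (Suc n)"
    proof
      fix n
      have "T (Suc n) \<le> ereal B" using assms by blast
      moreover have "ereal B < ereal t" using \<open>B < t\<close> by simp
      ultimately have "T (Suc n) < ereal t" by (rule le_less_trans)
      then show "\<not> ereal t < T (Suc n)" by (simp add: not_less less_imp_le del: qtchain.simps)
    qed
    then show "contour b K x \<omega> t = \<infinity>" by (rule contour_none)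
  qed
  then show ?thesis by (rule tendsto_eventually)
qed

lemma H_third:
  assumes nz: "\<forall>n. Z n \<noteq> 0 \<and> Z n \<noteq> \<infinity>"
    and th: "\<forall>M::nat. \<exists>N. \<forall>n\<ge>N. T n < T (Suc n) \<longrightarrow> ereal (real M) \<le> Z n - (T (Suc n) - T n)"
  shows "((\<lambda>t. contour b K x \<omega> t) \<longlongrightarrow> \<infinity>) at_top"
proof (rule tendsto_of_nat_bounds)
  fix M :: nat
  obtain N where N: "\<forall>n\<ge>N. T n < T (Suc n) \<longrightarrow> ereal (real M) \<le> Z n - (T (Suc n) - T n)" using th by blast
  have "T N < \<infinity>" using T_fin nz by blast
  then obtain \<tau>N where \<tau>N: "T N = ereal \<tau>N" "0 \<le> \<tau>N" using T_nonneg[of N] by (cases "T N") auto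
  show "eventually (\<lambda>t. ereal (real M) \<le> contour b K x \<omega> t) at_top"
    unfolding eventually_at_top_linorder
  proof (intro exI allI impI)
    fix t assume t: "\<tau>N \<le> t"
    have "(\<forall>n. \<not> ereal t < T (Suc n)) \<or> (\<exists>m. ereal t < T (Suc m) \<and> T m \<le> ereal t)"
      using contour_cases[of t] t \<tau>N by simp
    then show "ereal (real M) \<le> contour b K x \<omega> t"
    proof
      assume "\<forall>n. \<not> ereal t < T (Suc n)"
      then show ?thesis using contour_none by simp
    next
      assume "\<exists>m. ereal t < T (Suc m) \<and> T m \<le> ereal t"
      then obtain m where m: "ereal t < T (Suc m)" "T m \<le> ereal t" by blast
      have mN: "N \<le> m"
      proof (rule ccontr)
        assume "\<not> N \<le> m"
        then have a: "T (Suc m) \<le> T N" by (intro T_mono) simp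
        have "T N \<le> ereal t" using \<tau>N t by simp
        with a have "T (Suc m) \<le> ereal t" by (rule order.trans)
        then show False using leD m(1) by blast
      qed
      have lt: "T m < T (Suc m)" using m by simp
      have bnd: "ereal (real M) \<le> Z m - (T (Suc m) - T m)" using N mN lt by blast
      from interval_pos[OF m] nz obtain \<rho> \<tau> where
        r: "Z m = ereal \<rho>" "0 < \<rho>" "T m = ereal \<tau>" "\<tau> \<le> t" "t < \<tau> + dlt (Z m) (\<omega> m)" "dlt (Z m) (\<omega> m) \<le> \<rho>"
        by blast
      have TS: "T (Suc m) = ereal (\<tau> + dlt (Z m) (\<omega> m))" using T_Suc_fin[OF _ _ r(3)] nz by blast
      have c: "contour b K x \<omega> t = ereal (\<rho> - (t - \<tau>))" using contour_at[OF m] r nz by simp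
      have "real M \<le> \<rho> - dlt (Z m) (\<omega> m)" using bnd r TS by simp
      then show ?thesis using c r by simp
    qed
  qed
qed

lemma H_conv:
  assumes nz: "\<forall>n. Z n \<noteq> 0 \<and> Z n \<noteq> \<infinity>" and nb: "\<not> (\<exists>B::nat. \<forall>n. T n \<le> ereal (real B))"
    and tl: "((\<lambda>t. contour b K x \<omega> t) \<longlongrightarrow> \<infinity>) at_top"
  shows "\<forall>M::nat. \<exists>N. \<forall>n\<ge>N. T n < T (Suc n) \<longrightarrow> ereal (real M) \<le> Z n - (T (Suc n) - T n)"
proof (rule ccontr)
  assume "\<not> ?thesis"
  then obtain M :: nat where M: "\<forall>N. \<exists>n\<ge>N. T n < T (Suc n) \<and> Z n - (T (Suc n) - T n) < ereal (real M)"
    by (auto simp: not_le)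
  have "eventually (\<lambda>t. ereal (real M + 1) < contour b K x \<omega> t) at_top"
    using tl by (simp add: tendsto_PInfty)
  then obtain t0 where t0: "\<And>t. t0 \<le> t \<Longrightarrow> ereal (real M + 1) < contour b K x \<omega> t"
    unfolding eventually_at_top_linorder by blast
  obtain B :: nat where B: "max t0 0 \<le> real B" using real_arch_simple by blast
  obtain N where TN: "ereal (real B) < T N" using nb by (auto simp: not_le)
  obtain n where n: "N \<le> n" "T n < T (Suc n)" "Z n - (T (Suc n) - T n) < ereal (real M)" using M by blast
  have "T n < \<infinity>" using T_fin nz by blast
  then obtain \<tau> where \<tau>: "T n = ereal \<tau>" using T_nonneg[of n] by (cases "T n") auto
  have "Z n \<noteq> -\<infinity>" using Z_minf_T[of n] n(2) by auto
  then obtain \<rho> where \<rho>: "Z n = ereal \<rho>" using gsZ[of n] nz unfolding gs_def by (cases "Z n") auto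
  define \<delta> where "\<delta> = dlt (Z n) (\<omega> n)"
  have TS: "T (Suc n) = ereal (\<tau> + \<delta>)" unfolding \<delta>_def using T_Suc_fin[OF _ _ \<tau>] nz by blast
  have \<delta>0: "0 < \<delta>" using n(2) TS \<tau> by simp
  have w: "\<rho> - \<delta> < real M" using n(3) TS \<tau> \<rho> by simp
  define t where "t = \<tau> + \<delta> - min \<delta> 1 / 2"
  have tt: "\<tau> < t" "t < \<tau> + \<delta>" unfolding t_def using \<delta>0 by (auto simp: min_def)
  have "T N \<le> T n" using n(1) by (rule T_mono)
  then have "T N \<le> ereal \<tau>" using \<tau> by simp
  then have "ereal (real B) < ereal \<tau>" by (rule order.strict_trans2[OF TN])
  then have "real B < \<tau>" by simp
  then have "t0 \<le> t" using B tt by simp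
  have m: "ereal t < T (Suc n)" "T n \<le> ereal t" using tt TS \<tau> by auto
  have "\<rho> \<noteq> 0" using nz[rule_format, of n] \<rho> by auto
  then have "contour b K x \<omega> t = ereal (\<rho> - (t - \<tau>))" using contour_at[OF m] \<rho> \<tau> by simp
  moreover have "\<rho> - (t - \<tau>) < real M + 1" using w unfolding t_def by (auto simp: min_def)
  ultimately show False using t0[OF \<open>t0 \<le> t\<close>] by simp
qed

lemma T_char:
  "(tau0 b K x \<omega> < \<infinity> \<or> ((\<lambda>t. contour b K x \<omega> t) \<longlongrightarrow> \<infinity>) at_top) \<longleftrightarrow> Tp"
proof
  assume a: "tau0 b K x \<omega> < \<infinity> \<or> ((\<lambda>t. contour b K x \<omega> t) \<longlongrightarrow> \<infinity>) at_top"
  show Tp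
  proof (cases "(\<exists>n. Z n = 0 \<or> Z n = \<infinity>) \<or> (\<exists>B::nat. \<forall>n. T n \<le> ereal (real B))")
    case True then show ?thesis unfolding Tp_def by blast
  next
    case False
    then have nz: "\<forall>n. Z n \<noteq> 0 \<and> Z n \<noteq> \<infinity>" and nb: "\<not> (\<exists>B::nat. \<forall>n. T n \<le> ereal (real B))" by auto
    have "\<not> tau0 b K x \<omega> < \<infinity>" using tau0_fin_iff nz by blast
    then have "((\<lambda>t. contour b K x \<omega> t) \<longlongrightarrow> \<infinity>) at_top" using a by blast
    from H_conv[OF nz nb this] show ?thesis unfolding Tp_def by blast
  qed
next
  assume Tp
  show "tau0 b K x \<omega> < \<infinity> \<or> ((\<lambda>t. contour b K x \<omega> t) \<longlongrightarrow> \<infinity>) at_top"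
  proof (cases "\<exists>n. Z n = 0")
    case True then show ?thesis using tau0_fin_iff by blast
  next
    case nz0: False
    show ?thesis
    proof (cases "\<exists>n. Z n = \<infinity>")
      case True then show ?thesis using H_inf nz0 by blast
    next
      case False
      then have nz: "\<forall>n. Z n \<noteq> 0 \<and> Z n \<noteq> \<infinity>" using nz0 by auto
      show ?thesis
      proof (cases "\<exists>B::nat. \<forall>n. T n \<le> ereal (real B)")
        case True then show ?thesis using H_bdd by blast
      next
        case False
        then have "\<forall>M::nat. \<exists>N. \<forall>n\<ge>N. T n < T (Suc n) \<longrightarrow> ereal (real M) \<le> Z n - (T (Suc n) - T n)"
          using \<open>Tp\<close> nz unfolding Tp_def by blast
        then show ?thesis using H_third nz by blast
      qed
    qed
  qed
qed

lemma AE_good_Tp: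
  assumes g: "\<forall>M::nat. eventually (\<lambda>n. \<not> QA (real M) (Z n) (\<omega> n)) sequentially"
  shows Tp
proof (cases "\<exists>n. Z n = 0 \<or> Z n = \<infinity>")
  case True then show ?thesis unfolding Tp_def by blast
next
  case False
  then have nz: "\<forall>n. Z n \<noteq> 0 \<and> Z n \<noteq> \<infinity>" by auto
  have "\<forall>M::nat. \<exists>N. \<forall>n\<ge>N. T n < T (Suc n) \<longrightarrow> ereal (real M) \<le> Z n - (T (Suc n) - T n)"
  proof
    fix M :: nat
    obtain N where N: "\<forall>n\<ge>N. \<not> QA (real M) (Z n) (\<omega> n)" using g[rule_format, of M]
      unfolding eventually_sequentially by blast
    have "\<forall>n\<ge>N. T n < T (Suc n) \<longrightarrow> ereal (real M) \<le> Z n - (T (Suc n) - T n)"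
    proof (intro allI impI)
      fix n assume n: "N \<le> n" "T n < T (Suc n)"
      have "T n < \<infinity>" using T_fin nz by blast
      then obtain \<tau> where \<tau>: "T n = ereal \<tau>" using T_nonneg[of n] by (cases "T n") auto
      have "Z n \<noteq> -\<infinity>" using Z_minf_T[of n] n(2) by auto
      then have "0 < Z n" using gsZ[of n] nz unfolding gs_def by (auto simp: order.order_iff_strict)
      then obtain \<rho> where \<rho>: "Z n = ereal \<rho>" "0 < \<rho>" using nz by (cases "Z n") auto
      define e where "e = fst (\<omega> n)"
      have nQA: "\<not> QA (real M) (Z n) (\<omega> n)" using N n by blast
      then have c: "real M < \<rho>" "e \<le> G \<rho> - G (real M)" using \<rho> unfolding QA_def e_def by auto
      have eG: "e \<le> G \<rho>" using c G_nonneg[of "real M"] by simp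
      have mr: "max 0 (real_of_ereal (Z n)) = \<rho>" using \<rho> by simp
      have notlt: "\<not> G \<rho> < e" using eG by simp
      have dl: "dlt (Z n) (\<omega> n) = Sf b e \<rho>" unfolding dlt_def mr e_def[symmetric] using notlt \<rho>(2)
        by (simp add: Sm_def)
      have hz: "hazard b \<rho> (\<rho> - real M) = G \<rho> - G (real M)" using c by (subst hazard_G) auto
      have "Sf b e \<rho> \<le> \<rho> - real M"
        by (rule Sf_props(3)) (use \<rho> eG c hz in auto)
      moreover have "T (Suc n) = ereal (\<tau> + dlt (Z n) (\<omega> n))" using T_Suc_fin[OF _ _ \<tau>] nz by blast
      ultimately show "ereal (real M) \<le> Z n - (T (Suc n) - T n)" using \<rho> \<tau> dl by simp
    qed
    then show "\<exists>N. \<forall>n\<ge>N. T n < T (Suc n) \<longrightarrow> ereal (real M) \<le> Z n - (T (Suc n) - T n)" by blast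
  qed
  then show ?thesis unfolding Tp_def by blast
qed

end


context setting begin

lemma path_I: "0 \<le> x \<Longrightarrow> path b K x"
  unfolding path_def path_axioms_def using setting_axioms by simp

lemma Tset_eq:
  assumes x: "0 \<le> x"
  shows "{\<omega> \<in> space noise. tau0 b K x \<omega> < \<infinity> \<or> ((\<lambda>t. contour b K x \<omega> t) \<longlongrightarrow> \<infinity>) at_top} =
    {\<omega> \<in> space noise. (\<exists>n. qchain b K (ereal x) \<omega> n = 0 \<or> qchain b K (ereal x) \<omega> n = \<infinity>) \<or>
      (\<exists>B::nat. \<forall>n. qtchain b K (ereal x) \<omega> n \<le> ereal (real B)) \<or>
      (\<forall>M::nat. \<exists>N. \<forall>n\<ge>N. qtchain b K (ereal x) \<omega> n < qtchain b K (ereal x) \<omega> (Suc n) \<longrightarrow>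
          ereal (real M) \<le> qchain b K (ereal x) \<omega> n - (qtchain b K (ereal x) \<omega> (Suc n) - qtchain b K (ereal x) \<omega> n))}"
  using path.T_char[OF path_I[OF x]] unfolding path.Tp_def[OF path_I[OF x]] by blast

lemma part1:
  assumes x: "0 \<le> x"
  shows "measure noise {\<omega> \<in> space noise. tau0 b K x \<omega> < \<infinity> \<or> ((\<lambda>t. contour b K x \<omega> t) \<longlongrightarrow> \<infinity>) at_top} = 1"
proof -
  interpret prob_space noise by (rule prob_space_noise)
  let ?S = "{\<omega> \<in> space noise. (\<exists>n. qchain b K (ereal x) \<omega> n = 0 \<or> qchain b K (ereal x) \<omega> n = \<infinity>) \<or>
      (\<exists>B::nat. \<forall>n. qtchain b K (ereal x) \<omega> n \<le> ereal (real B)) \<or>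
      (\<forall>M::nat. \<exists>N. \<forall>n\<ge>N. qtchain b K (ereal x) \<omega> n < qtchain b K (ereal x) \<omega> (Suc n) \<longrightarrow>
          ereal (real M) \<le> qchain b K (ereal x) \<omega> n - (qtchain b K (ereal x) \<omega> (Suc n) - qtchain b K (ereal x) \<omega> n))}"
  have Sm: "?S \<in> sets noise" by measurable
  have AE1: "AE \<omega> in noise. \<forall>M::nat. eventually (\<lambda>n. \<not> QA (real M) (qchain b K (ereal x) \<omega> n) (\<omega> n)) sequentially"
    by (subst AE_all_countable) (intro allI AE_finitely_A, simp)
  have "AE \<omega> in noise. \<omega> \<in> ?S"
    using AE1
  proof (rule AE_mp, intro AE_I2 impI)
    fix \<omega> assume "\<forall>M::nat. eventually (\<lambda>n. \<not> QA (real M) (qchain b K (ereal x) \<omega> n) (\<omega> n)) sequentially"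
    from path.AE_good_Tp[OF path_I[OF x] this] show "\<omega> \<in> ?S"
      unfolding path.Tp_def[OF path_I[OF x]] by simp
  qed
  then have "measure noise ?S = 1" using prob_Collect_eq_1[of "\<lambda>\<omega>. \<omega> \<in> ?S"] Sm by simp
  then show ?thesis using Tset_eq[OF x] by simp
qed

lemma tau_inf_NN:
  assumes x: "0 \<le> x"
  shows "{\<omega> \<in> space noise. tau0 b K x \<omega> = \<infinity>} = NN x"
proof -
  have "tau0 b K x \<omega> = \<infinity> \<longleftrightarrow> (\<forall>k. qchain b K (ereal x) \<omega> k \<noteq> 0)" for \<omega>
    using path.tau0_fin_iff[OF path_I[OF x], of \<omega>] by (auto simp: less_top[symmetric] top_ereal_def)
  then show ?thesis unfolding NN_def by auto
qed

lemma part2: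
  assumes irred: "\<forall>x>0. \<forall>y>0.
                  measure noise {\<omega>\<in>space noise. \<exists>t>0. contour b K x \<omega> t = ereal y} > 0"
    and x0: "0 < x0" and p0: "measure noise (NN x0) > 0" and x: "0 < x"
  shows "measure noise (NN x) > 0"
proof -
  interpret prob_space noise by (rule prob_space_noise)
  define H where "H = {\<omega>\<in>space noise. \<exists>t>0. contour b K x \<omega> t = ereal x0}"
  have Hp: "measure noise H > 0" unfolding H_def using irred x x0 by blast
  then have Hm: "H \<in> sets noise" using measure_notin_sets[of H noise] by force
  define Q where "Q n = {\<omega>. QH x0 (qchain b K (ereal x) \<omega> n) (\<omega> n)}" for n
  have Qm: "Q n \<in> sets noise" for n
  proof -
    have "Q n = {\<omega> \<in> space noise. QH x0 (qchain b K (ereal x) \<omega> n) (\<omega> n)}" unfolding Q_def by simp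
    also have "\<dots> \<in> sets noise" unfolding QH_def by measurable
    finally show ?thesis .
  qed
  have HQ: "H \<subseteq> (\<Union>n. Q n)"
  proof
    fix \<omega> assume "\<omega> \<in> H"
    then obtain t where t: "0 < t" "contour b K x \<omega> t = ereal x0" unfolding H_def by blast
    from path.hit_QH[OF path_I[of x] x0 t] x show "\<omega> \<in> (\<Union>n. Q n)" unfolding Q_def by auto
  qed
  have "\<exists>n. 0 < emeasure noise (Q n)"
  proof (rule ccontr)
    assume "\<not> ?thesis"
    then have "Q n \<in> null_sets noise" for n using Qm by (auto simp: null_sets_def)
    then have "(\<Union>n. Q n) \<in> null_sets noise" by (rule null_sets_UN)
    then have "H \<in> null_sets noise" by (rule null_sets_subset[OF _ Hm HQ])
    then show False using Hp by (simp add: null_sets_def emeasure_eq_measure)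
  qed
  then obtain n where Qn: "0 < emeasure noise (Q n)" by blast
  define E where "E = {\<omega>. (qchain b K (ereal x) \<omega> n, (\<lambda>k. \<omega> (n + k))) \<in> P2 x0}"
  have "emeasure noise E = emeasure noise (Q n) * emeasure noise (NN x0)"
    unfolding E_def Q_def by (rule restart_prob[OF x0])
  moreover have "0 < emeasure noise (NN x0)" using p0 by (simp add: emeasure_eq_measure)
  ultimately have Ep: "0 < emeasure noise E" using Qn by (simp add: ennreal_zero_less_mult_iff)
  have "E \<subseteq> NN x" unfolding E_def NN_def using restart_subset[OF x0] by blast
  then have "emeasure noise E \<le> emeasure noise (NN x)" by (rule emeasure_mono) (rule NN_meas)
  then have "0 < emeasure noise (NN x)" using Ep by simp
  then show ?thesis by (simp add: emeasure_eq_measure)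
qed

end

theorem theorem5p2:
  fixes b :: "real \<Rightarrow> real" and K :: "real \<Rightarrow> ereal measure"
  assumes b_meas: "b \<in> borel_measurable (restrict_space borel {0..})"
    and b_nonneg: "\<forall>x\<ge>0. 0 \<le> b x"
    and b_locbdd: "\<forall>c\<ge>0. \<exists>B. \<forall>x\<in>{0..c}. b x \<le> B"
    and K_prob: "\<forall>x\<ge>0. prob_space (K x) \<and> sets (K x) = sets borel"
    and K_pos: "\<forall>x\<ge>0. emeasure (K x) {..0} = 0"
    and K_meas: "\<forall>A\<in>sets (borel :: ereal measure).
                   (\<lambda>x. emeasure (K x) A) \<in> borel_measurable (restrict_space borel {0..})"
    and K_cont: "\<forall>f :: ereal \<Rightarrow> real. continuous_on UNIV f \<and> bounded (range f) \<longrightarrow>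
                   continuous_on {0..} (\<lambda>x. integral\<^sup>L (K x) f)"
    and irred: "\<forall>x>0. \<forall>y>0.
                  measure noise {\<omega>\<in>space noise. \<exists>t>0. contour b K x \<omega> t = ereal y} > 0"
  shows "(\<forall>x\<ge>0. measure noise {\<omega>\<in>space noise. tau0 b K x \<omega> < \<infinity> \<or>
                    ((\<lambda>t. contour b K x \<omega> t) \<longlongrightarrow> \<infinity>) at_top} = 1)
       \<and> ((\<exists>x>0. measure noise {\<omega>\<in>space noise. tau0 b K x \<omega> = \<infinity>} > 0) \<longleftrightarrow>
          (\<forall>x>0. measure noise {\<omega>\<in>space noise. tau0 b K x \<omega> = \<infinity>} > 0))"
proof -
  interpret setting b K
    by unfold_locales (use b_meas b_nonneg b_locbdd K_prob K_pos K_meas in auto)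
  have A: "\<forall>x\<ge>0. measure noise {\<omega>\<in>space noise. tau0 b K x \<omega> < \<infinity> \<or>
                    ((\<lambda>t. contour b K x \<omega> t) \<longlongrightarrow> \<infinity>) at_top} = 1"
    using part1 by blast
  have B: "(\<exists>x>0. measure noise {\<omega>\<in>space noise. tau0 b K x \<omega> = \<infinity>} > 0) \<longleftrightarrow>
          (\<forall>x>0. measure noise {\<omega>\<in>space noise. tau0 b K x \<omega> = \<infinity>} > 0)"
  proof
    assume "\<exists>x>0. measure noise {\<omega>\<in>space noise. tau0 b K x \<omega> = \<infinity>} > 0"
    then obtain x0 where x0: "0 < x0" "measure noise (NN x0) > 0" using tau_inf_NN by force
    show "\<forall>x>0. measure noise {\<omega>\<in>space noise. tau0 b K x \<omega> = \<infinity>} > 0"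
    proof (intro allI impI)
      fix x :: real assume x: "0 < x"
      have "measure noise (NN x) > 0" by (rule part2[OF irred x0 x])
      then show "measure noise {\<omega>\<in>space noise. tau0 b K x \<omega> = \<infinity>} > 0" using tau_inf_NN x by simp
    qed
  next
    assume "\<forall>x>0. measure noise {\<omega>\<in>space noise. tau0 b K x \<omega> = \<infinity>} > 0"
    then show "\<exists>x>0. measure noise {\<omega>\<in>space noise. tau0 b K x \<omega> = \<infinity>} > 0" by (intro exI[of _ 1]) simp
  qed
  show ?thesis using A B by blast
qed


end
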